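(* Let $(\mathcal{A},\mathcal{B},\mathcal{C})$ be a recollement of extriangulated categories (with functors $i^*,i_*,i^!,j_!,j^*,j_*$ as in the context) and let $C\in\mathcal{C}$. Then $$\operatorname{pd}_{\mathcal{B}}j_!(C)\le\operatorname{pd}_{\mathcal{C}}C+\operatorname{gl}_{\mathcal{A}}\mathcal{B}+1,$$ where $\operatorname{gl}_{\mathcal{A}}\mathcal{B}:=\sup\{\operatorname{pd}_{\mathcal{B}}i_*(A)\mid A\in\mathcal{A}\}$ (with the convention $n+\infty=\infty$).
   Context: Extriangulated categories $(\mathcal{C},\mathbb{E},\mathfrak{s})$ are in the sense of Nakaoka–Palu: $\mathcal{C}$ additive, $\mathbb{E}:\mathcal{C}^{op}\times\mathcal{C}\to\mathrm{Ab}$ biadditive, $\mathfrak{s}$ an additive realization sending $\delta\in\mathbb{E}(C,A)$ to a class of sequences $[A\xrightarrow{x}B\xrightarrow{y}C]$, satisfying (ET1)–(ET4), (ET3)$^{op}$, (ET4)$^{op}$. Such a sequence is an $\mathbb{E}$-triangle $A\xrightarrow{x}B\xrightarrow{y}C\overset{\delta}{\dashrightarrow}$; $x$ is an inflation, $y$ a deflation, $A=\mathrm{cocone}(y)$, $C=\mathrm{cone}(x)$. Standing assumptions: every extriangulated category is Krull–Schmidt, Hom-finite, $k$-linear, has enough projectives and injectives, and satisfies (WIC): if $gf$ is an inflation then $f$ is an inflation; if $gf$ is a deflation then $g$ is a deflation. Projective object $P$: for every $\mathbb{E}$-triangle $A\to B\xrightarrow{y}C\dashrightarrow$ and $c:P\to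 C$ there is $b$ with $yb=c$; $\mathcal{P}(\mathcal{C})$ is the class of projectives. A finite $\mathbb{E}$-triangle sequence $X_n\to\cdots\to X_0\to C$ means there are $\mathbb{E}$-triangles $K_{i+1}\xrightarrow{g_i}X_i\xrightarrow{f_i}K_i\dashrightarrow$ ($0\le i\le n-1$), $K_0=C$, $K_n=X_n$, with maps $f_0$, $g_{i-1}f_i$, $g_{n-1}$. $\operatorname{pd}_{\mathcal{C}}C$ is the least $n$ admitting such a sequence with all $X_i$ projective ($\infty$ if none); $\operatorname{gl}\mathcal{C}=\sup_C\operatorname{pd}_{\mathcal{C}}C$. A morphism $f$ is compatible if ($f$ is both an inflation and a deflation) implies $f$ is an isomorphism. A sequence $A\xrightarrow{f}B\xrightarrow{g}C$ is right exact if there is an $\mathbb{E}$-triangle $K\xrightarrow{h_2}B\xrightarrow{g}C\dashrightarrow$ and a compatible deflation $h_1:A\to K$ with $f=h_2h_1$ (left exact dually). A 4-term sequence $A\xrightarrow{f}B\xrightarrow{g}C\xrightarrow{h}D$ is right (resp. left) exact if there are $\mathbb{E}$-triangles $A\xrightarrow{f}B\xrightarrow{g_1}K\dashrightarrow$ and $K\xrightarrow{g_2}C\xrightarrow{h}D\dashrightarrow$ with $g=g_2g_1$ and $g_1$ (resp. $g_2$) compatible. An additive functor $F:\mathcal{A}\to\mathcal{B}$ between extriangulated categories is right exact if (1) it sends compatible morphisms to compatible morphisms; (2) it sends right exact sequences to right exact sequences (so for each $\mathbb{E}_{\mathcal{A}}$-triangle $A\xrightarrow{f}B\xrightarrow{g}C\overset{\delta}{\dashrightarrow}$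 there is an $\mathbb{E}_{\mathcal{B}}$-triangle $A'\xrightarrow{x}FB\xrightarrow{Fg}FC\dashrightarrow$ with $Ff=xy$, $y:FA\to A'$ a compatible deflation); (3) there is a natural transformation $\eta_{(C,A)}:\mathbb{E}_{\mathcal{A}}(C,A)\to\mathbb{E}_{\mathcal{B}}(FC,A')$ with $\mathfrak{s}_{\mathcal{B}}(\eta(\delta))=[A'\xrightarrow{x}FB\xrightarrow{Fg}FC]$. Left exact functors are defined dually. $F$ is exact if it preserves compatible morphisms and there is a natural transformation $\eta:\mathbb{E}_{\mathcal{A}}(-,-)\Rightarrow\mathbb{E}_{\mathcal{B}}(F-,F-)$ with $\mathfrak{s}_{\mathcal{B}}(\eta(\delta))=[FA\xrightarrow{Fx}FB\xrightarrow{Fy}FC]$ whenever $\mathfrak{s}_{\mathcal{A}}(\delta)=[A\xrightarrow{x}B\xrightarrow{y}C]$. A recollement $(\mathcal{A},\mathcal{B},\mathcal{C})$ of extriangulated categories consists of exact functors $i_*:\mathcal{A}\to\mathcal{B}$, $j^*:\mathcal{B}\to\mathcal{C}$, right exact functors $i^*:\mathcal{B}\to\mathcal{A}$, $j_!:\mathcal{C}\to\mathcal{B}$, and left exact functors $i^!:\mathcal{B}\to\mathcal{A}$, $j_*:\mathcal{C}\to\mathcal{B}$ such that: (R1) $(i^*,i_*,i^!)$ and $(j_!,j^*,j_* )$ are adjoint triples; (R2) the essential image of $i_*$ equals the kernel of $j^*$ (objects sent to $0$); (R3) $i_*,j_!,j_*$ are fully faithful; (R4) for each $B\in\mathcal{B}$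 there is a left exact 4-term $\mathbb{E}$-triangle sequence $i_*i^!(B)\xrightarrow{\theta_B}B\xrightarrow{\vartheta_B}j_*j^*(B)\to i_*(A)$ with $A\in\mathcal{A}$ and $\theta_B,\vartheta_B$ the adjunction morphisms; (R5) for each $B\in\mathcal{B}$ there is a right exact 4-term $\mathbb{E}$-triangle sequence $i_*(A')\to j_!j^*(B)\xrightarrow{\upsilon_B}B\xrightarrow{\nu_B}i_*i^*(B)$ with $A'\in\mathcal{A}$ and $\upsilon_B,\nu_B$ the adjunction morphisms. *)

theory Defs
  imports Main "HOL-Library.Extended_Nat"
begin

text \<open>Morphisms carry their (unique) source and target
  via pairwise disjoint hom-sets; likewise for the groups E(C,A).
  cmp g f is the composite g o f.  ext C A is E(C,A); epull c d is c^* d and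
  epush a d is a_* d.  realizes d A x B y C means [A -x-> B -y-> C] belongs to s(d).\<close>

record ('o,'a,'e,'k) extri =
  obj :: "'o set"
  hom :: "'o \<Rightarrow> 'o \<Rightarrow> 'a set"
  cmp :: "'a \<Rightarrow> 'a \<Rightarrow> 'a"
  idm :: "'o \<Rightarrow> 'a"
  madd :: "'a \<Rightarrow> 'a \<Rightarrow> 'a"
  mzero :: "'o \<Rightarrow> 'o \<Rightarrow> 'a"
  mneg :: "'a \<Rightarrow> 'a"
  smul :: "'k \<Rightarrow> 'a \<Rightarrow> 'a"
  ext :: "'o \<Rightarrow> 'o \<Rightarrow> 'e set"
  eadd :: "'e \<Rightarrow> 'e \<Rightarrow> 'e"
  ezero :: "'o \<Rightarrow> 'o \<Rightarrow> 'e"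
  eneg :: "'e \<Rightarrow> 'e"
  epull :: "'a \<Rightarrow> 'e \<Rightarrow> 'e"
  epush :: "'a \<Rightarrow> 'e \<Rightarrow> 'e"
  realizes :: "'e \<Rightarrow> 'o \<Rightarrow> 'a \<Rightarrow> 'o \<Rightarrow> 'a \<Rightarrow> 'o \<Rightarrow> bool"

definition abgrp :: "'x set \<Rightarrow> ('x \<Rightarrow> 'x \<Rightarrow> 'x) \<Rightarrow> 'x \<Rightarrow> ('x \<Rightarrow> 'x) \<Rightarrow> bool" where
  "abgrp S ad z ng \<longleftrightarrow> z \<in> S \<and> (\<forall>x\<in>S. \<forall>y\<in>S. ad x y \<in> S) \<and> (\<forall>x\<in>S. ng x \<in> S)
     \<and> (\<forall>x\<in>S. \<forall>y\<in>S. \<forall>w\<in>S. ad (ad x y) w = ad x (ad y w))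
     \<and> (\<forall>x\<in>S. \<forall>y\<in>S. ad x y = ad y x)
     \<and> (\<forall>x\<in>S. ad z x = x) \<and> (\<forall>x\<in>S. ad (ng x) x = z)"

fun hsum :: "('x \<Rightarrow> 'x \<Rightarrow> 'x) \<Rightarrow> 'x \<Rightarrow> (nat \<Rightarrow> 'x) \<Rightarrow> nat \<Rightarrow> 'x" where
  "hsum ad z f 0 = z"
| "hsum ad z f (Suc n) = ad (hsum ad z f n) (f n)"

definition is_iso :: "('o,'a,'e,'k) extri \<Rightarrow> 'a \<Rightarrow> bool" where
  "is_iso E f \<longleftrightarrow> (\<exists>X Y. f \<in> hom E X Y \<and>
     (\<exists>g\<in>hom E Y X. cmp E g f = idm E X \<and> cmp E f g = idm E Y))"

definition isomorphic :: "('o,'a,'e,'k) extri \<Rightarrow> 'o \<Rightarrow> 'o \<Rightarrow> bool" where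
  "isomorphic E X Y \<longleftrightarrow> (\<exists>f\<in>hom E X Y. is_iso E f)"

definition zero_obj :: "('o,'a,'e,'k) extri \<Rightarrow> 'o \<Rightarrow> bool" where
  "zero_obj E Z \<longleftrightarrow> Z \<in> obj E \<and> idm E Z = mzero E Z Z"

definition biprod :: "('o,'a,'e,'k) extri \<Rightarrow> 'o \<Rightarrow> 'o \<Rightarrow> 'o \<Rightarrow> 'a \<Rightarrow> 'a \<Rightarrow> 'a \<Rightarrow> 'a \<Rightarrow> bool" where
  "biprod E X1 X2 S i1 i2 p1 p2 \<longleftrightarrow> S \<in> obj E \<and>
     i1 \<in> hom E X1 S \<and> i2 \<in> hom E X2 S \<and> p1 \<in> hom E S X1 \<and> p2 \<in> hom E S X2 \<and>
     cmp E p1 i1 = idm E X1 \<and> cmp E p2 i2 = idm E X2 \<and>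
     cmp E p2 i1 = mzero E X1 X2 \<and> cmp E p1 i2 = mzero E X2 X1 \<and>
     madd E (cmp E i1 p1) (cmp E i2 p2) = idm E S"

definition additive_cat :: "('o,'a,'e,'k) extri \<Rightarrow> bool" where
  "additive_cat E \<longleftrightarrow>
    (\<forall>X Y. (X \<notin> obj E \<or> Y \<notin> obj E) \<longrightarrow> hom E X Y = {}) \<and>
    (\<forall>X Y X' Y'. hom E X Y \<inter> hom E X' Y' \<noteq> {} \<longrightarrow> X = X' \<and> Y = Y') \<and>
    (\<forall>X\<in>obj E. idm E X \<in> hom E X X) \<and>
    (\<forall>X Y Z f g. f \<in> hom E X Y \<longrightarrow> g \<in> hom E Y Z \<longrightarrow> cmp E g f \<in> hom E X Z) \<and>
    (\<forall>X Y Z W f g h. f \<in> hom E X Y \<longrightarrow> g \<in> hom E Y Z \<longrightarrow> h \<in> hom E Z W \<longrightarrow>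
        cmp E h (cmp E g f) = cmp E (cmp E h g) f) \<and>
    (\<forall>X Y f. f \<in> hom E X Y \<longrightarrow> cmp E (idm E Y) f = f \<and> cmp E f (idm E X) = f) \<and>
    (\<forall>X\<in>obj E. \<forall>Y\<in>obj E. abgrp (hom E X Y) (madd E) (mzero E X Y) (mneg E)) \<and>
    (\<forall>X Y Z f f' g. f \<in> hom E X Y \<longrightarrow> f' \<in> hom E X Y \<longrightarrow> g \<in> hom E Y Z \<longrightarrow>
        cmp E g (madd E f f') = madd E (cmp E g f) (cmp E g f')) \<and>
    (\<forall>X Y Z f g g'. f \<in> hom E X Y \<longrightarrow> g \<in> hom E Y Z \<longrightarrow> g' \<in> hom E Y Z \<longrightarrow>
        cmp E (madd E g g') f = madd E (cmp E g f) (cmp E g' f)) \<and>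
    (\<exists>Z. zero_obj E Z) \<and>
    (\<forall>X1\<in>obj E. \<forall>X2\<in>obj E. \<exists>S i1 i2 p1 p2. biprod E X1 X2 S i1 i2 p1 p2)"

definition lincomb :: "('o,'a,'e,'k) extri \<Rightarrow> 'o \<Rightarrow> 'o \<Rightarrow> 'k list \<Rightarrow> 'a list \<Rightarrow> 'a" where
  "lincomb E X Y cs fs = hsum (madd E) (mzero E X Y) (\<lambda>i. smul E (cs ! i) (fs ! i)) (length fs)"

definition klinear_homfinite :: "('o,'a,'e,'k::field) extri \<Rightarrow> bool" where
  "klinear_homfinite E \<longleftrightarrow>
    (\<forall>X Y f c. f \<in> hom E X Y \<longrightarrow> smul E c f \<in> hom E X Y) \<and>
    (\<forall>X Y f g c. f \<in> hom E X Y \<longrightarrow> g \<in> hom E X Y \<longrightarrow>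
        smul E c (madd E f g) = madd E (smul E c f) (smul E c g)) \<and>
    (\<forall>X Y f c d. f \<in> hom E X Y \<longrightarrow> smul E (c + d) f = madd E (smul E c f) (smul E d f)) \<and>
    (\<forall>X Y f c d. f \<in> hom E X Y \<longrightarrow> smul E (c * d) f = smul E c (smul E d f)) \<and>
    (\<forall>X Y f. f \<in> hom E X Y \<longrightarrow> smul E 1 f = f) \<and>
    (\<forall>X Y Z f g c. f \<in> hom E X Y \<longrightarrow> g \<in> hom E Y Z \<longrightarrow>
        cmp E (smul E c g) f = smul E c (cmp E g f) \<and> cmp E g (smul E c f) = smul E c (cmp E g f)) \<and>
    (\<forall>X\<in>obj E. \<forall>Y\<in>obj E. \<exists>fs. set fs \<subseteq> hom E X Y \<and>
        (\<forall>f\<in>hom E X Y. \<exists>cs. length cs = length fs \<and> f = lincomb E X Y cs fs))"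

definition biadditive_ext :: "('o,'a,'e,'k) extri \<Rightarrow> bool" where
  "biadditive_ext E \<longleftrightarrow>
    (\<forall>C A. (C \<notin> obj E \<or> A \<notin> obj E) \<longrightarrow> ext E C A = {}) \<and>
    (\<forall>C A C' A'. ext E C A \<inter> ext E C' A' \<noteq> {} \<longrightarrow> C = C' \<and> A = A') \<and>
    (\<forall>C\<in>obj E. \<forall>A\<in>obj E. abgrp (ext E C A) (eadd E) (ezero E C A) (eneg E)) \<and>
    (\<forall>C' C A c d. c \<in> hom E C' C \<longrightarrow> d \<in> ext E C A \<longrightarrow> epull E c d \<in> ext E C' A) \<and>
    (\<forall>C A A' a d. a \<in> hom E A A' \<longrightarrow> d \<in> ext E C A \<longrightarrow> epush E a d \<in> ext E C A') \<and>
    (\<forall>C A d. d \<in> ext E C A \<longrightarrow> epull E (idm E C) d = d \<and> epush E (idm E A) d = d) \<and>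
    (\<forall>C'' C' C A c c' d. c' \<in> hom E C'' C' \<longrightarrow> c \<in> hom E C' C \<longrightarrow> d \<in> ext E C A \<longrightarrow>
        epull E (cmp E c c') d = epull E c' (epull E c d)) \<and>
    (\<forall>C A A' A'' a a' d. a \<in> hom E A A' \<longrightarrow> a' \<in> hom E A' A'' \<longrightarrow> d \<in> ext E C A \<longrightarrow>
        epush E (cmp E a' a) d = epush E a' (epush E a d)) \<and>
    (\<forall>C' C A A' c a d. c \<in> hom E C' C \<longrightarrow> a \<in> hom E A A' \<longrightarrow> d \<in> ext E C A \<longrightarrow>
        epush E a (epull E c d) = epull E c (epush E a d)) \<and>
    (\<forall>C' C A c d d'. c \<in> hom E C' C \<longrightarrow> d \<in> ext E C A \<longrightarrow> d' \<in> ext E C A \<longrightarrow>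
        epull E c (eadd E d d') = eadd E (epull E c d) (epull E c d')) \<and>
    (\<forall>C A A' a d d'. a \<in> hom E A A' \<longrightarrow> d \<in> ext E C A \<longrightarrow> d' \<in> ext E C A \<longrightarrow>
        epush E a (eadd E d d') = eadd E (epush E a d) (epush E a d')) \<and>
    (\<forall>C' C A c c' d. c \<in> hom E C' C \<longrightarrow> c' \<in> hom E C' C \<longrightarrow> d \<in> ext E C A \<longrightarrow>
        epull E (madd E c c') d = eadd E (epull E c d) (epull E c' d)) \<and>
    (\<forall>C A A' a a' d. a \<in> hom E A A' \<longrightarrow> a' \<in> hom E A A' \<longrightarrow> d \<in> ext E C A \<longrightarrow>
        epush E (madd E a a') d = eadd E (epush E a d) (epush E a' d))"

text \<open>s is an additive realization (Nakaoka--Palu Def. 2.9, 2.10).\<close>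
definition additive_realization :: "('o,'a,'e,'k) extri \<Rightarrow> bool" where
  "additive_realization E \<longleftrightarrow>
    (\<forall>d A x B y C. realizes E d A x B y C \<longrightarrow>
        d \<in> ext E C A \<and> x \<in> hom E A B \<and> y \<in> hom E B C) \<and>
    (\<forall>C A d. d \<in> ext E C A \<longrightarrow> (\<exists>B x y. realizes E d A x B y C)) \<and>
    (\<forall>d A x B y C A' x' B' y' C'. realizes E d A x B y C \<longrightarrow>
        (realizes E d A' x' B' y' C' \<longleftrightarrow>
          A' = A \<and> C' = C \<and> x' \<in> hom E A B' \<and> y' \<in> hom E B' C \<and>
          (\<exists>b\<in>hom E B B'. is_iso E b \<and> cmp E b x = x' \<and> cmp E y' b = y))) \<and>
    (\<forall>d d' A x B y C A' x' B' y' C' a c.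
        realizes E d A x B y C \<longrightarrow> realizes E d' A' x' B' y' C' \<longrightarrow>
        a \<in> hom E A A' \<longrightarrow> c \<in> hom E C C' \<longrightarrow> epush E a d = epull E c d' \<longrightarrow>
        (\<exists>b\<in>hom E B B'. cmp E b x = cmp E x' a \<and> cmp E y' b = cmp E c y)) \<and>
    (\<forall>A C S i1 i2 p1 p2. biprod E A C S i1 i2 p1 p2 \<longrightarrow>
        realizes E (ezero E C A) A i1 S p2 C) \<and>
    (\<forall>d d' A x B y C A' x' B' y' C' SA ia1 ia2 pa1 pa2 SB ib1 ib2 pb1 pb2
        SC ic1 ic2 pc1 pc2 e.
        realizes E d A x B y C \<longrightarrow> realizes E d' A' x' B' y' C' \<longrightarrow>
        biprod E A A' SA ia1 ia2 pa1 pa2 \<longrightarrow> biprod E B B' SB ib1 ib2 pb1 pb2 \<longrightarrow>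
        biprod E C C' SC ic1 ic2 pc1 pc2 \<longrightarrow> e \<in> ext E SC SA \<longrightarrow>
        epush E pa1 (epull E ic1 e) = d \<longrightarrow> epush E pa2 (epull E ic2 e) = d' \<longrightarrow>
        epush E pa1 (epull E ic2 e) = ezero E C' A \<longrightarrow>
        epush E pa2 (epull E ic1 e) = ezero E C A' \<longrightarrow>
        realizes E e SA (madd E (cmp E ib1 (cmp E x pa1)) (cmp E ib2 (cmp E x' pa2))) SB
                        (madd E (cmp E ic1 (cmp E y pb1)) (cmp E ic2 (cmp E y' pb2))) SC)"

definition ET3 :: "('o,'a,'e,'k) extri \<Rightarrow> bool" where
  "ET3 E \<longleftrightarrow> (\<forall>d d' A x B y C A' x' B' y' C' a b.
     realizes E d A x B y C \<longrightarrow> realizes E d' A' x' B' y' C' \<longrightarrow>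
     a \<in> hom E A A' \<longrightarrow> b \<in> hom E B B' \<longrightarrow> cmp E b x = cmp E x' a \<longrightarrow>
     (\<exists>c\<in>hom E C C'. epush E a d = epull E c d' \<and> cmp E c y = cmp E y' b))"

definition ET3op :: "('o,'a,'e,'k) extri \<Rightarrow> bool" where
  "ET3op E \<longleftrightarrow> (\<forall>d d' A x B y C A' x' B' y' C' b c.
     realizes E d A x B y C \<longrightarrow> realizes E d' A' x' B' y' C' \<longrightarrow>
     b \<in> hom E B B' \<longrightarrow> c \<in> hom E C C' \<longrightarrow> cmp E y' b = cmp E c y \<longrightarrow>
     (\<exists>a\<in>hom E A A'. epush E a d = epull E c d' \<and> cmp E x' a = cmp E b x))"

definition ET4 :: "('o,'a,'e,'k) extri \<Rightarrow> bool" where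
  "ET4 E \<longleftrightarrow> (\<forall>d d' A f B f' D g C g' F.
     realizes E d A f B f' D \<longrightarrow> realizes E d' B g C g' F \<longrightarrow>
     (\<exists>Eo h' dd e d''. realizes E d'' A (cmp E g f) C h' Eo \<and>
        realizes E (epush E f' d') D dd Eo e F \<and>
        cmp E dd f' = cmp E h' g \<and> cmp E e h' = g' \<and>
        epull E dd d'' = d \<and> epush E f d'' = epull E e d'))"

definition ET4op :: "('o,'a,'e,'k) extri \<Rightarrow> bool" where
  "ET4op E \<longleftrightarrow> (\<forall>d d' D f' B f A F g' C g.
     realizes E d D f' B f A \<longrightarrow> realizes E d' F g' C g B \<longrightarrow>
     (\<exists>Eo h' dd e d''. realizes E d'' Eo h' C (cmp E f g) A \<and>
        realizes E (epull E f' d') F e Eo dd D \<and>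
        cmp E f' dd = cmp E g h' \<and> cmp E h' e = g' \<and>
        epush E dd d'' = d \<and> epull E f d'' = epush E e d'))"

definition inflation :: "('o,'a,'e,'k) extri \<Rightarrow> 'a \<Rightarrow> bool" where
  "inflation E x \<longleftrightarrow> (\<exists>d A B y C. realizes E d A x B y C)"

definition deflation :: "('o,'a,'e,'k) extri \<Rightarrow> 'a \<Rightarrow> bool" where
  "deflation E y \<longleftrightarrow> (\<exists>d A x B C. realizes E d A x B y C)"

definition compatible :: "('o,'a,'e,'k) extri \<Rightarrow> 'a \<Rightarrow> bool" where
  "compatible E f \<longleftrightarrow> (inflation E f \<and> deflation E f \<longrightarrow> is_iso E f)"

definition projective :: "('o,'a,'e,'k) extri \<Rightarrow> 'o \<Rightarrow> bool" where
  "projective E P \<longleftrightarrow> P \<in> obj E \<and> (\<forall>d A x B y C c. realizes E d A x B y C \<longrightarrow>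
      c \<in> hom E P C \<longrightarrow> (\<exists>b\<in>hom E P B. cmp E y b = c))"

definition injective :: "('o,'a,'e,'k) extri \<Rightarrow> 'o \<Rightarrow> bool" where
  "injective E I \<longleftrightarrow> I \<in> obj E \<and> (\<forall>d A x B y C a. realizes E d A x B y C \<longrightarrow>
      a \<in> hom E A I \<longrightarrow> (\<exists>b\<in>hom E B I. cmp E b x = a))"

definition local_end :: "('o,'a,'e,'k) extri \<Rightarrow> 'o \<Rightarrow> bool" where
  "local_end E X \<longleftrightarrow> X \<in> obj E \<and> \<not> zero_obj E X \<and>
     (\<forall>f\<in>hom E X X. is_iso E f \<or> is_iso E (madd E (idm E X) (mneg E f)))"

definition krull_schmidt :: "('o,'a,'e,'k) extri \<Rightarrow> bool" where
  "krull_schmidt E \<longleftrightarrow> (\<forall>X\<in>obj E. \<exists>n Y \<iota> \<pi>.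
     (\<forall>i<n. local_end E (Y i) \<and> \<iota> i \<in> hom E (Y i) X \<and> \<pi> i \<in> hom E X (Y i)) \<and>
     (\<forall>i<n. \<forall>j<n. cmp E (\<pi> i) (\<iota> j) = (if i = j then idm E (Y i) else mzero E (Y j) (Y i))) \<and>
     hsum (madd E) (mzero E X X) (\<lambda>i. cmp E (\<iota> i) (\<pi> i)) n = idm E X)"

definition WIC :: "('o,'a,'e,'k) extri \<Rightarrow> bool" where
  "WIC E \<longleftrightarrow> (\<forall>X Y Z f g. f \<in> hom E X Y \<longrightarrow> g \<in> hom E Y Z \<longrightarrow>
      (inflation E (cmp E g f) \<longrightarrow> inflation E f) \<and>
      (deflation E (cmp E g f) \<longrightarrow> deflation E g))"

definition enough_proj_inj :: "('o,'a,'e,'k) extri \<Rightarrow> bool" where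
  "enough_proj_inj E \<longleftrightarrow> (\<forall>C\<in>obj E. \<exists>d A x P y. realizes E d A x P y C \<and> projective E P)
     \<and> (\<forall>A\<in>obj E. \<exists>d I x C y. realizes E d A x I y C \<and> injective E I)"

definition good_extri :: "('o,'a,'e,'k::field) extri \<Rightarrow> bool" where
  "good_extri E \<longleftrightarrow> additive_cat E \<and> biadditive_ext E \<and> additive_realization E \<and>
     ET3 E \<and> ET3op E \<and> ET4 E \<and> ET4op E \<and>
     klinear_homfinite E \<and> krull_schmidt E \<and> enough_proj_inj E \<and> WIC E"

text \<open>A finite E-triangle sequence X_n \<rightarrow> ... \<rightarrow> X_0 \<rightarrow> C with all X_i projective.\<close>
definition proj_res :: "('o,'a,'e,'k) extri \<Rightarrow> 'o \<Rightarrow> nat \<Rightarrow> bool" where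
  "proj_res E C n \<longleftrightarrow> (\<exists>K X :: nat \<Rightarrow> 'o. K 0 = C \<and> K n = X n \<and>
     (\<forall>i<n. \<exists>d g f. realizes E d (K (Suc i)) g (X i) f (K i)) \<and>
     (\<forall>i\<le>n. projective E (X i)))"

definition pd :: "('o,'a,'e,'k) extri \<Rightarrow> 'o \<Rightarrow> enat" where
  "pd E C = (if \<exists>n. proj_res E C n then enat (LEAST n. proj_res E C n) else \<infinity>)"

record ('o1,'a1,'o2,'a2) fctr =
  fo :: "'o1 \<Rightarrow> 'o2"
  fm :: "'a1 \<Rightarrow> 'a2"

definition additive_functor :: "('o1,'a1,'e1,'k) extri \<Rightarrow> ('o2,'a2,'e2,'k) extri \<Rightarrow>
    ('o1,'a1,'o2,'a2) fctr \<Rightarrow> bool" where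
  "additive_functor S T F \<longleftrightarrow>
    (\<forall>X\<in>obj S. fo F X \<in> obj T) \<and>
    (\<forall>X Y f. f \<in> hom S X Y \<longrightarrow> fm F f \<in> hom T (fo F X) (fo F Y)) \<and>
    (\<forall>X\<in>obj S. fm F (idm S X) = idm T (fo F X)) \<and>
    (\<forall>X Y Z f g. f \<in> hom S X Y \<longrightarrow> g \<in> hom S Y Z \<longrightarrow> fm F (cmp S g f) = cmp T (fm F g) (fm F f)) \<and>
    (\<forall>X Y f g. f \<in> hom S X Y \<longrightarrow> g \<in> hom S X Y \<longrightarrow> fm F (madd S f g) = madd T (fm F f) (fm F g))"

definition preserves_compatible :: "('o1,'a1,'e1,'k) extri \<Rightarrow> ('o2,'a2,'e2,'k) extri \<Rightarrow>
    ('o1,'a1,'o2,'a2) fctr \<Rightarrow> bool" where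
  "preserves_compatible S T F \<longleftrightarrow>
    (\<forall>X Y f. f \<in> hom S X Y \<longrightarrow> compatible S f \<longrightarrow> compatible T (fm F f))"

definition right_exact_seq :: "('o,'a,'e,'k) extri \<Rightarrow> 'o \<Rightarrow> 'a \<Rightarrow> 'o \<Rightarrow> 'a \<Rightarrow> 'o \<Rightarrow> bool" where
  "right_exact_seq E A f B g C \<longleftrightarrow> f \<in> hom E A B \<and> g \<in> hom E B C \<and>
     (\<exists>K h2 d h1. realizes E d K h2 B g C \<and> h1 \<in> hom E A K \<and>
        compatible E h1 \<and> deflation E h1 \<and> f = cmp E h2 h1)"

definition left_exact_seq :: "('o,'a,'e,'k) extri \<Rightarrow> 'o \<Rightarrow> 'a \<Rightarrow> 'o \<Rightarrow> 'a \<Rightarrow> 'o \<Rightarrow> bool" where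
  "left_exact_seq E A f B g C \<longleftrightarrow> f \<in> hom E A B \<and> g \<in> hom E B C \<and>
     (\<exists>K h1 d h2. realizes E d A f B h1 K \<and> h2 \<in> hom E K C \<and>
        compatible E h2 \<and> inflation E h2 \<and> g = cmp E h2 h1)"

definition right_exact_seq4 :: "('o,'a,'e,'k) extri \<Rightarrow> 'o \<Rightarrow> 'a \<Rightarrow> 'o \<Rightarrow> 'a \<Rightarrow> 'o \<Rightarrow> 'a \<Rightarrow> 'o \<Rightarrow> bool" where
  "right_exact_seq4 E A f B g C h D \<longleftrightarrow>
     (\<exists>K g1 g2 d1 d2. realizes E d1 A f B g1 K \<and> realizes E d2 K g2 C h D \<and>
        g = cmp E g2 g1 \<and> compatible E g1)"

definition left_exact_seq4 :: "('o,'a,'e,'k) extri \<Rightarrow> 'o \<Rightarrow> 'a \<Rightarrow> 'o \<Rightarrow> 'a \<Rightarrow> 'o \<Rightarrow> 'a \<Rightarrow> 'o \<Rightarrow> bool" where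
  "left_exact_seq4 E A f B g C h D \<longleftrightarrow>
     (\<exists>K g1 g2 d1 d2. realizes E d1 A f B g1 K \<and> realizes E d2 K g2 C h D \<and>
        g = cmp E g2 g1 \<and> compatible E g2)"

definition exact_functor :: "('o1,'a1,'e1,'k) extri \<Rightarrow> ('o2,'a2,'e2,'k) extri \<Rightarrow>
    ('o1,'a1,'o2,'a2) fctr \<Rightarrow> bool" where
  "exact_functor S T F \<longleftrightarrow> additive_functor S T F \<and> preserves_compatible S T F \<and>
    (\<exists>\<eta> :: 'e1 \<Rightarrow> 'e2.
      (\<forall>C A d. d \<in> ext S C A \<longrightarrow> \<eta> d \<in> ext T (fo F C) (fo F A)) \<and>
      (\<forall>C A d d'. d \<in> ext S C A \<longrightarrow> d' \<in> ext S C A \<longrightarrow> \<eta> (eadd S d d') = eadd T (\<eta> d) (\<eta> d')) \<and>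
      (\<forall>C' C A c d. c \<in> hom S C' C \<longrightarrow> d \<in> ext S C A \<longrightarrow>
          \<eta> (epull S c d) = epull T (fm F c) (\<eta> d)) \<and>
      (\<forall>C A A' a d. a \<in> hom S A A' \<longrightarrow> d \<in> ext S C A \<longrightarrow>
          \<eta> (epush S a d) = epush T (fm F a) (\<eta> d)) \<and>
      (\<forall>d A x B y C. realizes S d A x B y C \<longrightarrow>
          realizes T (\<eta> d) (fo F A) (fm F x) (fo F B) (fm F y) (fo F C)))"

definition right_exact_functor :: "('o1,'a1,'e1,'k) extri \<Rightarrow> ('o2,'a2,'e2,'k) extri \<Rightarrow>
    ('o1,'a1,'o2,'a2) fctr \<Rightarrow> bool" where
  "right_exact_functor S T F \<longleftrightarrow> additive_functor S T F \<and> preserves_compatible S T F \<and>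
    (\<forall>A f B g C. right_exact_seq S A f B g C \<longrightarrow>
        right_exact_seq T (fo F A) (fm F f) (fo F B) (fm F g) (fo F C)) \<and>
    (\<forall>d A f B g C. realizes S d A f B g C \<longrightarrow>
       (\<exists>A' x y e. realizes T e A' x (fo F B) (fm F g) (fo F C) \<and>
          y \<in> hom T (fo F A) A' \<and> compatible T y \<and> deflation T y \<and> fm F f = cmp T x y))"

definition left_exact_functor :: "('o1,'a1,'e1,'k) extri \<Rightarrow> ('o2,'a2,'e2,'k) extri \<Rightarrow>
    ('o1,'a1,'o2,'a2) fctr \<Rightarrow> bool" where
  "left_exact_functor S T F \<longleftrightarrow> additive_functor S T F \<and> preserves_compatible S T F \<and>
    (\<forall>A f B g C. left_exact_seq S A f B g C \<longrightarrow>
        left_exact_seq T (fo F A) (fm F f) (fo F B) (fm F g) (fo F C)) \<and>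
    (\<forall>d A f B g C. realizes S d A f B g C \<longrightarrow>
       (\<exists>C' x y e. realizes T e (fo F A) (fm F f) (fo F B) x C' \<and>
          y \<in> hom T C' (fo F C) \<and> compatible T y \<and> inflation T y \<and> fm F g = cmp T y x))"

definition fully_faithful :: "('o1,'a1,'e1,'k) extri \<Rightarrow> ('o2,'a2,'e2,'k) extri \<Rightarrow>
    ('o1,'a1,'o2,'a2) fctr \<Rightarrow> bool" where
  "fully_faithful S T F \<longleftrightarrow> (\<forall>X\<in>obj S. \<forall>Y\<in>obj S.
     bij_betw (fm F) (hom S X Y) (hom T (fo F X) (fo F Y)))"

definition adjunction :: "('o1,'a1,'e1,'k) extri \<Rightarrow> ('o2,'a2,'e2,'k) extri \<Rightarrow>
    ('o1,'a1,'o2,'a2) fctr \<Rightarrow> ('o2,'a2,'o1,'a1) fctr \<Rightarrow> ('o1 \<Rightarrow> 'a1) \<Rightarrow> ('o2 \<Rightarrow> 'a2) \<Rightarrow> bool" where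
  "adjunction S T F G un cu \<longleftrightarrow>
    (\<forall>X\<in>obj S. un X \<in> hom S X (fo G (fo F X))) \<and>
    (\<forall>Y\<in>obj T. cu Y \<in> hom T (fo F (fo G Y)) Y) \<and>
    (\<forall>X X' f. f \<in> hom S X X' \<longrightarrow> cmp S (un X') f = cmp S (fm G (fm F f)) (un X)) \<and>
    (\<forall>Y Y' g. g \<in> hom T Y Y' \<longrightarrow> cmp T g (cu Y) = cmp T (cu Y') (fm F (fm G g))) \<and>
    (\<forall>X\<in>obj S. cmp T (cu (fo F X)) (fm F (un X)) = idm T (fo F X)) \<and>
    (\<forall>Y\<in>obj T. cmp S (fm G (cu Y)) (un (fo G Y)) = idm S (fo G Y))"

definition recollement ::
  "('oa,'ma,'ea,'k) extri \<Rightarrow> ('ob,'mb,'eb,'k) extri \<Rightarrow> ('oc,'mc,'ec,'k) extri \<Rightarrow>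
   ('ob,'mb,'oa,'ma) fctr \<Rightarrow> ('oa,'ma,'ob,'mb) fctr \<Rightarrow> ('ob,'mb,'oa,'ma) fctr \<Rightarrow>
   ('oc,'mc,'ob,'mb) fctr \<Rightarrow> ('ob,'mb,'oc,'mc) fctr \<Rightarrow> ('oc,'mc,'ob,'mb) fctr \<Rightarrow> bool" where
  "recollement A B C iup ilow ish jsh jup jlow \<longleftrightarrow>
    exact_functor A B ilow \<and> exact_functor B C jup \<and>
    right_exact_functor B A iup \<and> right_exact_functor C B jsh \<and>
    left_exact_functor B A ish \<and> left_exact_functor C B jlow \<and>
    (\<exists>nu cu1 un2 theta upsilon un4 vartheta cu4.
      adjunction B A iup ilow nu cu1 \<and> adjunction A B ilow ish un2 theta \<and>
      adjunction C B jsh jup un4 upsilon \<and> adjunction B C jup jlow vartheta cu4 \<and>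
      \<comment> \<open>(R2)\<close>
      (\<forall>Y. (Y \<in> obj B \<and> (\<exists>X\<in>obj A. isomorphic B Y (fo ilow X))) \<longleftrightarrow>
           (Y \<in> obj B \<and> zero_obj C (fo jup Y))) \<and>
      \<comment> \<open>(R3)\<close>
      fully_faithful A B ilow \<and> fully_faithful C B jsh \<and> fully_faithful C B jlow \<and>
      \<comment> \<open>(R4)\<close>
      (\<forall>Y\<in>obj B. \<exists>X\<in>obj A. \<exists>h.
         left_exact_seq4 B (fo ilow (fo ish Y)) (theta Y) Y (vartheta Y)
            (fo jlow (fo jup Y)) h (fo ilow X)) \<and>
      \<comment> \<open>(R5)\<close>
      (\<forall>Y\<in>obj B. \<exists>X\<in>obj A. \<exists>h.
         right_exact_seq4 B (fo ilow X) h (fo jsh (fo jup Y)) (upsilon Y) Y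
            (nu Y) (fo ilow (fo iup Y))))"

definition gl_rel :: "('oa,'ma,'ea,'k) extri \<Rightarrow> ('ob,'mb,'eb,'k) extri \<Rightarrow>
    ('oa,'ma,'ob,'mb) fctr \<Rightarrow> enat" where
  "gl_rel A B ilow = (SUP X\<in>obj A. pd B (fo ilow X))"

end

theory Submission
  imports Defs
begin

lemma abgrp_z: "abgrp S ad z ng \<Longrightarrow> z \<in> S" unfolding abgrp_def by blast
lemma abgrp_ad: "abgrp S ad z ng \<Longrightarrow> x \<in> S \<Longrightarrow> y \<in> S \<Longrightarrow> ad x y \<in> S" unfolding abgrp_def by blast
lemma abgrp_ng: "abgrp S ad z ng \<Longrightarrow> x \<in> S \<Longrightarrow> ng x \<in> S" unfolding abgrp_def by blast
lemma abgrp_assoc: "abgrp S ad z ng \<Longrightarrow> x \<in> S \<Longrightarrow> y \<in> S \<Longrightarrow> w \<in> S \<Longrightarrow> ad (ad x y) w = ad x (ad y w)"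
  unfolding abgrp_def by blast
lemma abgrp_comm: "abgrp S ad z ng \<Longrightarrow> x \<in> S \<Longrightarrow> y \<in> S \<Longrightarrow> ad x y = ad y x"
  unfolding abgrp_def by blast
lemma abgrp_lz: "abgrp S ad z ng \<Longrightarrow> x \<in> S \<Longrightarrow> ad z x = x" unfolding abgrp_def by blast
lemma abgrp_rz: "abgrp S ad z ng \<Longrightarrow> x \<in> S \<Longrightarrow> ad x z = x"
proof - assume G: "abgrp S ad z ng" and x: "x \<in> S"
  have "ad x z = ad z x" using abgrp_comm[OF G x abgrp_z[OF G]] .
  then show ?thesis using abgrp_lz[OF G x] by simp qed
lemma abgrp_linv: "abgrp S ad z ng \<Longrightarrow> x \<in> S \<Longrightarrow> ad (ng x) x = z" unfolding abgrp_def by blast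
lemma abgrp_rinv: "abgrp S ad z ng \<Longrightarrow> x \<in> S \<Longrightarrow> ad x (ng x) = z"
proof - assume G: "abgrp S ad z ng" and x: "x \<in> S"
  have "ad x (ng x) = ad (ng x) x" using abgrp_comm[OF G x abgrp_ng[OF G x]] .
  then show ?thesis using abgrp_linv[OF G x] by simp qed
lemma abgrp_cancel: assumes G: "abgrp S ad z ng" and "x \<in> S" "y \<in> S" "w \<in> S" and e: "ad x y = ad x w"
  shows "y = w"
proof -
  have "y = ad (ad (ng x) x) y" using G assms by (simp add: abgrp_linv abgrp_lz)
  also have "\<dots> = ad (ng x) (ad x y)" using G assms by (simp add: abgrp_assoc abgrp_ng)
  also have "\<dots> = ad (ng x) (ad x w)" using e by simp
  also have "\<dots> = ad (ad (ng x) x) w" using G assms by (simp add: abgrp_assoc abgrp_ng)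
  also have "\<dots> = w" using G assms by (simp add: abgrp_linv abgrp_lz)
  finally show ?thesis .
qed
lemma abgrp_idem: "abgrp S ad z ng \<Longrightarrow> x \<in> S \<Longrightarrow> ad x x = x \<Longrightarrow> x = z"
proof - assume G: "abgrp S ad z ng" and x: "x \<in> S" and e: "ad x x = x"
  have "ad x x = ad x z" using e abgrp_rz[OF G x] by simp
  then show ?thesis using abgrp_cancel[OF G x x abgrp_z[OF G]] by simp qed
lemma abgrp_neg_uniq: "abgrp S ad z ng \<Longrightarrow> x \<in> S \<Longrightarrow> y \<in> S \<Longrightarrow> ad x y = z \<Longrightarrow> y = ng x"
proof - assume G: "abgrp S ad z ng" and x: "x \<in> S" and y: "y \<in> S" and e: "ad x y = z"
  have "ad x y = ad x (ng x)" using e abgrp_rinv[OF G x] by simp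
  then show ?thesis using abgrp_cancel[OF G x y abgrp_ng[OF G x]] by simp qed
lemma abgrp_neg_z: "abgrp S ad z ng \<Longrightarrow> ng z = z"
proof - assume G: "abgrp S ad z ng"
  show ?thesis using abgrp_neg_uniq[OF G abgrp_z[OF G] abgrp_z[OF G] abgrp_rz[OF G abgrp_z[OF G]]] by simp qed


locale ge =
  fixes E :: "('o,'a,'e,'k::field) extri"
  assumes good: "good_extri E"
begin

lemma AC: "additive_cat E" using good by (simp add: good_extri_def)
lemma BE: "biadditive_ext E" using good by (simp add: good_extri_def)
lemma AR: "additive_realization E" using good by (simp add: good_extri_def)
lemma et3: "ET3 E" using good by (simp add: good_extri_def)
lemma et3op: "ET3op E" using good by (simp add: good_extri_def)
lemma et4: "ET4 E" using good by (simp add: good_extri_def)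
lemma et4op: "ET4op E" using good by (simp add: good_extri_def)
lemma wic: "WIC E" using good by (simp add: good_extri_def)
lemma EPI: "enough_proj_inj E" using good by (simp add: good_extri_def)

lemma AC_H: "\<forall>X Y. (X \<notin> obj E \<or> Y \<notin> obj E) \<longrightarrow> hom E X Y = {}"
  using AC unfolding additive_cat_def by (elim conjE) assumption
lemma hom_obj: "f \<in> hom E X Y \<Longrightarrow> X \<in> obj E \<and> Y \<in> obj E"
  using AC_H by blast
lemma AC_H2: "\<forall>X Y X' Y'. hom E X Y \<inter> hom E X' Y' \<noteq> {} \<longrightarrow> X = X' \<and> Y = Y'"
  using AC unfolding additive_cat_def by (elim conjE) assumption
lemma hom_uniq: "f \<in> hom E X Y \<Longrightarrow> f \<in> hom E X' Y' \<Longrightarrow> X = X' \<and> Y = Y'"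
  using AC_H2 by blast
lemma id_hom: "X \<in> obj E \<Longrightarrow> idm E X \<in> hom E X X"
  using AC by (simp add: additive_cat_def)
lemma cmp_hom: "f \<in> hom E X Y \<Longrightarrow> g \<in> hom E Y Z \<Longrightarrow> cmp E g f \<in> hom E X Z"
  using AC by (simp add: additive_cat_def)
lemma assoc: "f \<in> hom E X Y \<Longrightarrow> g \<in> hom E Y Z \<Longrightarrow> h \<in> hom E Z W \<Longrightarrow>
        cmp E h (cmp E g f) = cmp E (cmp E h g) f"
  using AC by (simp add: additive_cat_def)
lemma idl: "f \<in> hom E X Y \<Longrightarrow> cmp E (idm E Y) f = f"
  using AC by (simp add: additive_cat_def)
lemma idr: "f \<in> hom E X Y \<Longrightarrow> cmp E f (idm E X) = f"
  using AC by (simp add: additive_cat_def)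
lemma homgrp: "X \<in> obj E \<Longrightarrow> Y \<in> obj E \<Longrightarrow> abgrp (hom E X Y) (madd E) (mzero E X Y) (mneg E)"
  using AC by (simp add: additive_cat_def)
lemma distl: "f \<in> hom E X Y \<Longrightarrow> f' \<in> hom E X Y \<Longrightarrow> g \<in> hom E Y Z \<Longrightarrow>
        cmp E g (madd E f f') = madd E (cmp E g f) (cmp E g f')"
  using AC by (simp add: additive_cat_def)
lemma distr: "f \<in> hom E X Y \<Longrightarrow> g \<in> hom E Y Z \<Longrightarrow> g' \<in> hom E Y Z \<Longrightarrow>
        cmp E (madd E g g') f = madd E (cmp E g f) (cmp E g' f)"
  using AC by (simp add: additive_cat_def)
lemma zero_exists: "\<exists>Z. zero_obj E Z"
  using AC by (simp add: additive_cat_def)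
lemma biprod_exists: "X1 \<in> obj E \<Longrightarrow> X2 \<in> obj E \<Longrightarrow> \<exists>S i1 i2 p1 p2. biprod E X1 X2 S i1 i2 p1 p2"
  using AC by (simp add: additive_cat_def)

lemma BE_H: "\<forall>C A. (C \<notin> obj E \<or> A \<notin> obj E) \<longrightarrow> ext E C A = {}"
  using BE unfolding biadditive_ext_def by (elim conjE) assumption
lemma ext_obj: "d \<in> ext E C A \<Longrightarrow> C \<in> obj E \<and> A \<in> obj E"
  using BE_H by blast
lemma extgrp: "C \<in> obj E \<Longrightarrow> A \<in> obj E \<Longrightarrow> abgrp (ext E C A) (eadd E) (ezero E C A) (eneg E)"
  using BE by (simp add: biadditive_ext_def)
lemma pull_ext: "c \<in> hom E C' C \<Longrightarrow> d \<in> ext E C A \<Longrightarrow> epull E c d \<in> ext E C' A"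
  using BE by (simp add: biadditive_ext_def)
lemma push_ext: "a \<in> hom E A A' \<Longrightarrow> d \<in> ext E C A \<Longrightarrow> epush E a d \<in> ext E C A'"
  using BE by (simp add: biadditive_ext_def)
lemma pull_id: "d \<in> ext E C A \<Longrightarrow> epull E (idm E C) d = d"
  using BE by (simp add: biadditive_ext_def)
lemma push_id: "d \<in> ext E C A \<Longrightarrow> epush E (idm E A) d = d"
  using BE by (simp add: biadditive_ext_def)
lemma pull_cmp: "c' \<in> hom E C'' C' \<Longrightarrow> c \<in> hom E C' C \<Longrightarrow> d \<in> ext E C A \<Longrightarrow>
        epull E (cmp E c c') d = epull E c' (epull E c d)"
  using BE by (simp add: biadditive_ext_def)
lemma push_cmp: "a \<in> hom E A A' \<Longrightarrow> a' \<in> hom E A' A'' \<Longrightarrow> d \<in> ext E C A \<Longrightarrow>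
        epush E (cmp E a' a) d = epush E a' (epush E a d)"
  using BE by (simp add: biadditive_ext_def)
lemma push_pull: "c \<in> hom E C' C \<Longrightarrow> a \<in> hom E A A' \<Longrightarrow> d \<in> ext E C A \<Longrightarrow>
        epush E a (epull E c d) = epull E c (epush E a d)"
  using BE by (simp add: biadditive_ext_def)
lemma pull_add: "c \<in> hom E C' C \<Longrightarrow> d \<in> ext E C A \<Longrightarrow> d' \<in> ext E C A \<Longrightarrow>
        epull E c (eadd E d d') = eadd E (epull E c d) (epull E c d')"
  using BE by (simp add: biadditive_ext_def)
lemma push_add: "a \<in> hom E A A' \<Longrightarrow> d \<in> ext E C A \<Longrightarrow> d' \<in> ext E C A \<Longrightarrow>
        epush E a (eadd E d d') = eadd E (epush E a d) (epush E a d')"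
  using BE by (simp add: biadditive_ext_def)
lemma pull_madd: "c \<in> hom E C' C \<Longrightarrow> c' \<in> hom E C' C \<Longrightarrow> d \<in> ext E C A \<Longrightarrow>
        epull E (madd E c c') d = eadd E (epull E c d) (epull E c' d)"
  using BE by (simp add: biadditive_ext_def)
lemma push_madd: "a \<in> hom E A A' \<Longrightarrow> a' \<in> hom E A A' \<Longrightarrow> d \<in> ext E C A \<Longrightarrow>
        epush E (madd E a a') d = eadd E (epush E a d) (epush E a' d)"
  using BE by (simp add: biadditive_ext_def)

lemma rz_mem_H: "\<forall>d A x B y C. realizes E d A x B y C \<longrightarrow>
        d \<in> ext E C A \<and> x \<in> hom E A B \<and> y \<in> hom E B C"
  using AR unfolding additive_realization_def by (elim conjE) assumption
lemma rz_mem: "realizes E d A x B y C \<Longrightarrow> d \<in> ext E C A \<and> x \<in> hom E A B \<and> y \<in> hom E B C"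
  using rz_mem_H by blast
lemma rz_ex_H: "\<forall>C A d. d \<in> ext E C A \<longrightarrow> (\<exists>B x y. realizes E d A x B y C)"
  using AR unfolding additive_realization_def by (elim conjE) assumption
lemma rz_ex: "d \<in> ext E C A \<Longrightarrow> \<exists>B x y. realizes E d A x B y C"
  using rz_ex_H by blast
lemma rz_iso_H: "\<forall>d A x B y C A' x' B' y' C'. realizes E d A x B y C \<longrightarrow>
        (realizes E d A' x' B' y' C' \<longleftrightarrow>
          A' = A \<and> C' = C \<and> x' \<in> hom E A B' \<and> y' \<in> hom E B' C \<and>
          (\<exists>b\<in>hom E B B'. is_iso E b \<and> cmp E b x = x' \<and> cmp E y' b = y))"
  using AR unfolding additive_realization_def by (elim conjE) assumption
lemma rz_iso: "realizes E d A x B y C \<Longrightarrow> realizes E d A' x' B' y' C' \<Longrightarrow>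
   A' = A \<and> C' = C \<and> (\<exists>b\<in>hom E B B'. is_iso E b \<and> cmp E b x = x' \<and> cmp E y' b = y)"
  using rz_iso_H by blast
lemma rz_trans_H: "\<forall>d A x B y C A' x' B' y' C'. realizes E d A x B y C \<longrightarrow>
        (realizes E d A' x' B' y' C' \<longleftrightarrow>
          A' = A \<and> C' = C \<and> x' \<in> hom E A B' \<and> y' \<in> hom E B' C \<and>
          (\<exists>b\<in>hom E B B'. is_iso E b \<and> cmp E b x = x' \<and> cmp E y' b = y))"
  using AR unfolding additive_realization_def by (elim conjE) assumption
lemma rz_trans: "realizes E d A x B y C \<Longrightarrow> x' \<in> hom E A B' \<Longrightarrow> y' \<in> hom E B' C \<Longrightarrow>
   b \<in> hom E B B' \<Longrightarrow> is_iso E b \<Longrightarrow> cmp E b x = x' \<Longrightarrow> cmp E y' b = y \<Longrightarrow> realizes E d A x' B' y' C"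
  using rz_trans_H by blast
lemma rz_mor_H: "\<forall>d d' A x B y C A' x' B' y' C' a c.
        realizes E d A x B y C \<longrightarrow> realizes E d' A' x' B' y' C' \<longrightarrow>
        a \<in> hom E A A' \<longrightarrow> c \<in> hom E C C' \<longrightarrow> epush E a d = epull E c d' \<longrightarrow>
        (\<exists>b\<in>hom E B B'. cmp E b x = cmp E x' a \<and> cmp E y' b = cmp E c y)"
  using AR unfolding additive_realization_def by (elim conjE) assumption
lemma rz_mor: "realizes E d A x B y C \<Longrightarrow> realizes E d' A' x' B' y' C' \<Longrightarrow>
        a \<in> hom E A A' \<Longrightarrow> c \<in> hom E C C' \<Longrightarrow> epush E a d = epull E c d' \<Longrightarrow>
        (\<exists>b\<in>hom E B B'. cmp E b x = cmp E x' a \<and> cmp E y' b = cmp E c y)"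
  using rz_mor_H by blast
lemma rz_split_H: "\<forall>A C S i1 i2 p1 p2. biprod E A C S i1 i2 p1 p2 \<longrightarrow>
        realizes E (ezero E C A) A i1 S p2 C"
  using AR unfolding additive_realization_def by (elim conjE) assumption
lemma rz_split: "biprod E A C S i1 i2 p1 p2 \<Longrightarrow> realizes E (ezero E C A) A i1 S p2 C"
  using rz_split_H by blast
lemma rz_sum: "realizes E d A x B y C \<Longrightarrow> realizes E d' A' x' B' y' C' \<Longrightarrow>
        biprod E A A' SA ia1 ia2 pa1 pa2 \<Longrightarrow> biprod E B B' SB ib1 ib2 pb1 pb2 \<Longrightarrow>
        biprod E C C' SC ic1 ic2 pc1 pc2 \<Longrightarrow> e \<in> ext E SC SA \<Longrightarrow>
        epush E pa1 (epull E ic1 e) = d \<Longrightarrow> epush E pa2 (epull E ic2 e) = d' \<Longrightarrow>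
        epush E pa1 (epull E ic2 e) = ezero E C' A \<Longrightarrow>
        epush E pa2 (epull E ic1 e) = ezero E C A' \<Longrightarrow>
        realizes E e SA (madd E (cmp E ib1 (cmp E x pa1)) (cmp E ib2 (cmp E x' pa2))) SB
                        (madd E (cmp E ic1 (cmp E y pb1)) (cmp E ic2 (cmp E y' pb2))) SC"
  using AR unfolding additive_realization_def apply (elim conjE)
  apply (erule_tac x=d in allE, erule_tac x=d' in allE, erule_tac x=A in allE, erule_tac x=x in allE,
         erule_tac x=B in allE, erule_tac x=y in allE, erule_tac x=C in allE, erule_tac x=A' in allE,
         erule_tac x=x' in allE, erule_tac x=B' in allE, erule_tac x=y' in allE, erule_tac x=C' in allE,
         erule_tac x=SA in allE, erule_tac x=ia1 in allE, erule_tac x=ia2 in allE, erule_tac x=pa1 in allE,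
         erule_tac x=pa2 in allE, erule_tac x=SB in allE, erule_tac x=ib1 in allE, erule_tac x=ib2 in allE,
         erule_tac x=pb1 in allE, erule_tac x=pb2 in allE, erule_tac x=SC in allE, erule_tac x=ic1 in allE,
         erule_tac x=ic2 in allE, erule_tac x=pc1 in allE, erule_tac x=pc2 in allE, erule_tac x=e in allE)
  by simp

lemma ET3: "realizes E d A x B y C \<Longrightarrow> realizes E d' A' x' B' y' C' \<Longrightarrow>
     a \<in> hom E A A' \<Longrightarrow> b \<in> hom E B B' \<Longrightarrow> cmp E b x = cmp E x' a \<Longrightarrow>
     (\<exists>c\<in>hom E C C'. epush E a d = epull E c d' \<and> cmp E c y = cmp E y' b)"
  using et3 by (simp add: ET3_def)
lemma ET3op: "realizes E d A x B y C \<Longrightarrow> realizes E d' A' x' B' y' C' \<Longrightarrow>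
     b \<in> hom E B B' \<Longrightarrow> c \<in> hom E C C' \<Longrightarrow> cmp E y' b = cmp E c y \<Longrightarrow>
     (\<exists>a\<in>hom E A A'. epush E a d = epull E c d' \<and> cmp E x' a = cmp E b x)"
  using et3op by (simp add: ET3op_def)
lemma ET4: "realizes E d A f B f' D \<Longrightarrow> realizes E d' B g C g' F \<Longrightarrow>
     (\<exists>Eo h' dd e d''. realizes E d'' A (cmp E g f) C h' Eo \<and>
        realizes E (epush E f' d') D dd Eo e F \<and>
        cmp E dd f' = cmp E h' g \<and> cmp E e h' = g' \<and>
        epull E dd d'' = d \<and> epush E f d'' = epull E e d')"
  using et4 by (simp add: ET4_def)
lemma ET4op: "realizes E d D f' B f A \<Longrightarrow> realizes E d' F g' C g B \<Longrightarrow>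
     (\<exists>Eo h' dd e d''. realizes E d'' Eo h' C (cmp E f g) A \<and>
        realizes E (epull E f' d') F e Eo dd D \<and>
        cmp E f' dd = cmp E g h' \<and> cmp E h' e = g' \<and>
        epush E dd d'' = d \<and> epull E f d'' = epush E e d')"
  using et4op by (simp add: ET4op_def)
lemma WIC_inf: "f \<in> hom E X Y \<Longrightarrow> g \<in> hom E Y Z \<Longrightarrow> inflation E (cmp E g f) \<Longrightarrow> inflation E f"
  using wic by (simp add: WIC_def)
lemma WIC_def': "f \<in> hom E X Y \<Longrightarrow> g \<in> hom E Y Z \<Longrightarrow> deflation E (cmp E g f) \<Longrightarrow> deflation E g"
  using wic by (simp add: WIC_def)
lemma enough_proj: "C \<in> obj E \<Longrightarrow> \<exists>d A x P y. realizes E d A x P y C \<and> projective E P"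
  using EPI by (simp add: enough_proj_inj_def)

lemma rz_obj: "realizes E d A x B y C \<Longrightarrow> A \<in> obj E \<and> B \<in> obj E \<and> C \<in> obj E"
  using rz_mem hom_obj by blast

end

context ge
begin

lemma mzero_hom: "X \<in> obj E \<Longrightarrow> Y \<in> obj E \<Longrightarrow> mzero E X Y \<in> hom E X Y"
  using homgrp abgrp_z by metis
lemma madd_hom: "f \<in> hom E X Y \<Longrightarrow> g \<in> hom E X Y \<Longrightarrow> madd E f g \<in> hom E X Y"
  using homgrp abgrp_ad hom_obj by metis
lemma mneg_hom: "f \<in> hom E X Y \<Longrightarrow> mneg E f \<in> hom E X Y"
  using homgrp abgrp_ng hom_obj by metis
lemma madd_0l: "f \<in> hom E X Y \<Longrightarrow> madd E (mzero E X Y) f = f"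
  using homgrp abgrp_lz hom_obj by metis
lemma madd_0r: "f \<in> hom E X Y \<Longrightarrow> madd E f (mzero E X Y) = f"
  using homgrp abgrp_rz hom_obj by metis
lemma madd_comm: "f \<in> hom E X Y \<Longrightarrow> g \<in> hom E X Y \<Longrightarrow> madd E f g = madd E g f"
  using homgrp abgrp_comm hom_obj by metis
lemma madd_assoc: "f \<in> hom E X Y \<Longrightarrow> g \<in> hom E X Y \<Longrightarrow> h \<in> hom E X Y \<Longrightarrow>
   madd E (madd E f g) h = madd E f (madd E g h)"
  using homgrp abgrp_assoc hom_obj by metis
lemma madd_negr: "f \<in> hom E X Y \<Longrightarrow> madd E f (mneg E f) = mzero E X Y"
  using homgrp abgrp_rinv hom_obj by metis
lemma madd_negl: "f \<in> hom E X Y \<Longrightarrow> madd E (mneg E f) f = mzero E X Y"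
  using homgrp abgrp_linv hom_obj by metis
lemma madd_idem: "f \<in> hom E X Y \<Longrightarrow> madd E f f = f \<Longrightarrow> f = mzero E X Y"
  using homgrp abgrp_idem hom_obj by metis
lemma mneg_uniq: "f \<in> hom E X Y \<Longrightarrow> g \<in> hom E X Y \<Longrightarrow> madd E f g = mzero E X Y \<Longrightarrow> g = mneg E f"
  using homgrp abgrp_neg_uniq hom_obj by metis
lemma mneg_zero: "X \<in> obj E \<Longrightarrow> Y \<in> obj E \<Longrightarrow> mneg E (mzero E X Y) = mzero E X Y"
  using homgrp abgrp_neg_z by metis

lemma zero_cmp_l: assumes f: "f \<in> hom E X Y" and Z: "Z \<in> obj E"
  shows "cmp E (mzero E Y Z) f = mzero E X Z"
proof -
  have Y: "Y \<in> obj E" "X \<in> obj E" using hom_obj f by auto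
  have z: "mzero E Y Z \<in> hom E Y Z" using mzero_hom Y Z by auto
  have h: "cmp E (mzero E Y Z) f \<in> hom E X Z" using cmp_hom f z by auto
  have "cmp E (mzero E Y Z) f = cmp E (madd E (mzero E Y Z) (mzero E Y Z)) f"
    using madd_0l z by simp
  also have "\<dots> = madd E (cmp E (mzero E Y Z) f) (cmp E (mzero E Y Z) f)"
    using distr f z by blast
  finally show ?thesis using madd_idem h by metis
qed

lemma zero_cmp_r: assumes g: "g \<in> hom E Y Z" and X: "X \<in> obj E"
  shows "cmp E g (mzero E X Y) = mzero E X Z"
proof -
  have Y: "Y \<in> obj E" "Z \<in> obj E" using hom_obj g by auto
  have z: "mzero E X Y \<in> hom E X Y" using mzero_hom Y X by auto
  have h: "cmp E g (mzero E X Y) \<in> hom E X Z" using cmp_hom g z by auto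
  have "cmp E g (mzero E X Y) = cmp E g (madd E (mzero E X Y) (mzero E X Y))"
    using madd_0l z by simp
  also have "\<dots> = madd E (cmp E g (mzero E X Y)) (cmp E g (mzero E X Y))"
    using distl g z by blast
  finally show ?thesis using madd_idem h by metis
qed

lemma neg_cmp_l: assumes f: "f \<in> hom E X Y" and g: "g \<in> hom E Y Z"
  shows "cmp E (mneg E g) f = mneg E (cmp E g f)"
proof -
  have ng: "mneg E g \<in> hom E Y Z" using mneg_hom g by auto
  have "madd E (cmp E g f) (cmp E (mneg E g) f) = cmp E (madd E g (mneg E g)) f"
    using distr f g ng by simp
  also have "\<dots> = cmp E (mzero E Y Z) f" using madd_negr g by simp
  also have "\<dots> = mzero E X Z" using zero_cmp_l f hom_obj g by blast
  finally show ?thesis using mneg_uniq cmp_hom f g ng by metis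
qed

lemma neg_cmp_r: assumes f: "f \<in> hom E X Y" and g: "g \<in> hom E Y Z"
  shows "cmp E g (mneg E f) = mneg E (cmp E g f)"
proof -
  have nf: "mneg E f \<in> hom E X Y" using mneg_hom f by auto
  have "madd E (cmp E g f) (cmp E g (mneg E f)) = cmp E g (madd E f (mneg E f))"
    using distl f g nf by simp
  also have "\<dots> = cmp E g (mzero E X Y)" using madd_negr f by simp
  also have "\<dots> = mzero E X Z" using zero_cmp_r g hom_obj f by blast
  finally show ?thesis using mneg_uniq cmp_hom f g nf by metis
qed

lemma zero_obj_in: "zero_obj E Z \<Longrightarrow> Z \<in> obj E" by (simp add: zero_obj_def)

lemma zero_obj_to: assumes Z: "zero_obj E Z" and f: "f \<in> hom E X Z" shows "f = mzero E X Z"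
proof -
  have "f = cmp E (idm E Z) f" using idl f by simp
  also have "\<dots> = cmp E (mzero E Z Z) f" using Z by (simp add: zero_obj_def)
  also have "\<dots> = mzero E X Z" using zero_cmp_l f Z zero_obj_in by blast
  finally show ?thesis .
qed

lemma zero_obj_from: assumes Z: "zero_obj E Z" and f: "f \<in> hom E Z X" shows "f = mzero E Z X"
proof -
  have "f = cmp E f (idm E Z)" using idr f by simp
  also have "\<dots> = cmp E f (mzero E Z Z)" using Z by (simp add: zero_obj_def)
  also have "\<dots> = mzero E Z X" using zero_cmp_r f Z zero_obj_in by blast
  finally show ?thesis .
qed

lemma iso_inv: assumes f: "f \<in> hom E X Y" and i: "is_iso E f"
  shows "\<exists>g\<in>hom E Y X. cmp E g f = idm E X \<and> cmp E f g = idm E Y"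
  using i f hom_uniq unfolding is_iso_def by metis

lemma iso_intro: "f \<in> hom E X Y \<Longrightarrow> g \<in> hom E Y X \<Longrightarrow> cmp E g f = idm E X \<Longrightarrow> cmp E f g = idm E Y
  \<Longrightarrow> is_iso E f"
  unfolding is_iso_def by blast

lemma iso_intro2: assumes f: "f \<in> hom E X Y" and g: "g \<in> hom E Y X" and h: "h \<in> hom E Y X"
  and gf: "cmp E g f = idm E X" and fh: "cmp E f h = idm E Y" shows "is_iso E f"
proof -
  have "g = cmp E g (idm E Y)" using idr g by simp
  also have "\<dots> = cmp E g (cmp E f h)" using fh by simp
  also have "\<dots> = cmp E (cmp E g f) h" using assoc h f g by blast
  also have "\<dots> = h" using gf idl h by simp
  finally show ?thesis using iso_intro f g gf fh by simp
qed

lemma id_iso: "X \<in> obj E \<Longrightarrow> is_iso E (idm E X)"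
  using iso_intro id_hom idl by metis

lemma iso_cmp: assumes f: "f \<in> hom E X Y" and g: "g \<in> hom E Y Z" and "is_iso E f" "is_iso E g"
  shows "is_iso E (cmp E g f)"
proof -
  obtain f' where f': "f' \<in> hom E Y X" "cmp E f' f = idm E X" "cmp E f f' = idm E Y"
    using iso_inv f assms by blast
  obtain g' where g': "g' \<in> hom E Z Y" "cmp E g' g = idm E Y" "cmp E g g' = idm E Z"
    using iso_inv g assms by blast
  have gf: "cmp E g f \<in> hom E X Z" using cmp_hom f g by blast
  have fg: "cmp E f' g' \<in> hom E Z X" using cmp_hom f' g' by blast
  have 1: "cmp E (cmp E f' g') (cmp E g f) = idm E X"
  proof -
    have "cmp E (cmp E f' g') (cmp E g f) = cmp E f' (cmp E g' (cmp E g f))"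
      using assoc f g f' g' gf by (metis cmp_hom)
    also have "\<dots> = cmp E f' (cmp E (cmp E g' g) f)" using assoc f g g' by metis
    also have "\<dots> = idm E X" using g' f' idl f by simp
    finally show ?thesis .
  qed
  have 2: "cmp E (cmp E g f) (cmp E f' g') = idm E Z"
  proof -
    have "cmp E (cmp E g f) (cmp E f' g') = cmp E g (cmp E f (cmp E f' g'))"
      using assoc f g f' g' fg by (metis cmp_hom)
    also have "\<dots> = cmp E g (cmp E (cmp E f f') g')" using assoc f f' g' by metis
    also have "\<dots> = idm E Z" using g' f' idl g' by simp
    finally show ?thesis .
  qed
  show ?thesis using iso_intro gf fg 1 2 by blast
qed

lemma iso_inv_iso: assumes f: "f \<in> hom E X Y" "g \<in> hom E Y X" "cmp E g f = idm E X" "cmp E f g = idm E Y"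
  shows "is_iso E g"
  using iso_intro assms by blast

end

context ge
begin

lemma ezero_ext: "C \<in> obj E \<Longrightarrow> A \<in> obj E \<Longrightarrow> ezero E C A \<in> ext E C A"
  using extgrp abgrp_z by metis
lemma eadd_ext: "d \<in> ext E C A \<Longrightarrow> d' \<in> ext E C A \<Longrightarrow> eadd E d d' \<in> ext E C A"
  using extgrp abgrp_ad ext_obj by metis
lemma eneg_ext: "d \<in> ext E C A \<Longrightarrow> eneg E d \<in> ext E C A"
  using extgrp abgrp_ng ext_obj by metis
lemma eadd_0l: "d \<in> ext E C A \<Longrightarrow> eadd E (ezero E C A) d = d"
  using extgrp abgrp_lz ext_obj by metis
lemma eadd_0r: "d \<in> ext E C A \<Longrightarrow> eadd E d (ezero E C A) = d"
  using extgrp abgrp_rz ext_obj by metis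
lemma eadd_comm: "d \<in> ext E C A \<Longrightarrow> d' \<in> ext E C A \<Longrightarrow> eadd E d d' = eadd E d' d"
  using extgrp abgrp_comm ext_obj by metis
lemma eadd_assoc: "d \<in> ext E C A \<Longrightarrow> d' \<in> ext E C A \<Longrightarrow> d'' \<in> ext E C A \<Longrightarrow>
   eadd E (eadd E d d') d'' = eadd E d (eadd E d' d'')"
  using extgrp abgrp_assoc ext_obj by metis
lemma eadd_negr: "d \<in> ext E C A \<Longrightarrow> eadd E d (eneg E d) = ezero E C A"
  using extgrp abgrp_rinv ext_obj by metis
lemma eadd_negl: "d \<in> ext E C A \<Longrightarrow> eadd E (eneg E d) d = ezero E C A"
  using extgrp abgrp_linv ext_obj by metis
lemma eadd_idem: "d \<in> ext E C A \<Longrightarrow> eadd E d d = d \<Longrightarrow> d = ezero E C A"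
  using extgrp abgrp_idem ext_obj by metis
lemma eneg_uniq: "d \<in> ext E C A \<Longrightarrow> d' \<in> ext E C A \<Longrightarrow> eadd E d d' = ezero E C A \<Longrightarrow> d' = eneg E d"
  using extgrp abgrp_neg_uniq ext_obj by metis

lemma pull_ezero: assumes c: "c \<in> hom E C' C" and A: "A \<in> obj E"
  shows "epull E c (ezero E C A) = ezero E C' A"
proof -
  have C: "C \<in> obj E" using hom_obj c by auto
  have z: "ezero E C A \<in> ext E C A" using ezero_ext C A by auto
  have h: "epull E c (ezero E C A) \<in> ext E C' A" using pull_ext c z by auto
  have "epull E c (ezero E C A) = epull E c (eadd E (ezero E C A) (ezero E C A))" using eadd_0l z by simp
  also have "\<dots> = eadd E (epull E c (ezero E C A)) (epull E c (ezero E C A))" using pull_add c z by blast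
  finally show ?thesis using eadd_idem h by metis
qed

lemma push_ezero: assumes a: "a \<in> hom E A A'" and C: "C \<in> obj E"
  shows "epush E a (ezero E C A) = ezero E C A'"
proof -
  have A: "A \<in> obj E" using hom_obj a by auto
  have z: "ezero E C A \<in> ext E C A" using ezero_ext C A by auto
  have h: "epush E a (ezero E C A) \<in> ext E C A'" using push_ext a z by auto
  have "epush E a (ezero E C A) = epush E a (eadd E (ezero E C A) (ezero E C A))" using eadd_0l z by simp
  also have "\<dots> = eadd E (epush E a (ezero E C A)) (epush E a (ezero E C A))" using push_add a z by blast
  finally show ?thesis using eadd_idem h by metis
qed

lemma pull_mzero: assumes d: "d \<in> ext E C A" and C': "C' \<in> obj E"
  shows "epull E (mzero E C' C) d = ezero E C' A"
proof -
  have C: "C \<in> obj E" using ext_obj d by auto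
  have z: "mzero E C' C \<in> hom E C' C" using mzero_hom C C' by auto
  have h: "epull E (mzero E C' C) d \<in> ext E C' A" using pull_ext z d by auto
  have "epull E (mzero E C' C) d = epull E (madd E (mzero E C' C) (mzero E C' C)) d" using madd_0l z by simp
  also have "\<dots> = eadd E (epull E (mzero E C' C) d) (epull E (mzero E C' C) d)" using pull_madd z d by blast
  finally show ?thesis using eadd_idem h by metis
qed

lemma push_mzero: assumes d: "d \<in> ext E C A" and A': "A' \<in> obj E"
  shows "epush E (mzero E A A') d = ezero E C A'"
proof -
  have A: "A \<in> obj E" using ext_obj d by auto
  have z: "mzero E A A' \<in> hom E A A'" using mzero_hom A A' by auto
  have h: "epush E (mzero E A A') d \<in> ext E C A'" using push_ext z d by auto
  have "epush E (mzero E A A') d = epush E (madd E (mzero E A A') (mzero E A A')) d" using madd_0l z by simp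
  also have "\<dots> = eadd E (epush E (mzero E A A') d) (epush E (mzero E A A') d)" using push_madd z d by blast
  finally show ?thesis using eadd_idem h by metis
qed

lemma pull_eneg: assumes c: "c \<in> hom E C' C" and d: "d \<in> ext E C A"
  shows "epull E c (eneg E d) = eneg E (epull E c d)"
proof -
  have A: "A \<in> obj E" using ext_obj d by auto
  have nd: "eneg E d \<in> ext E C A" using eneg_ext d by auto
  have "eadd E (epull E c d) (epull E c (eneg E d)) = epull E c (eadd E d (eneg E d))"
    using pull_add c d nd by simp
  also have "\<dots> = ezero E C' A" using eadd_negr d pull_ezero c A by simp
  finally show ?thesis using eneg_uniq pull_ext c d nd by metis
qed

lemma push_mneg: assumes a: "a \<in> hom E A A'" and d: "d \<in> ext E C A"
  shows "epush E (mneg E a) d = eneg E (epush E a d)"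
proof -
  have C: "C \<in> obj E" using ext_obj d by auto
  have na: "mneg E a \<in> hom E A A'" using mneg_hom a by auto
  have "eadd E (epush E a d) (epush E (mneg E a) d) = epush E (madd E a (mneg E a)) d"
    using push_madd a na d by simp
  also have "\<dots> = ezero E C A'" using madd_negr a push_mzero d hom_obj a by metis
  finally show ?thesis using eneg_uniq push_ext a d na by metis
qed

lemma split_id: assumes A: "A \<in> obj E" and Z: "zero_obj E Z"
  shows "realizes E (ezero E Z A) A (idm E A) A (mzero E A Z) Z"
proof -
  have Zo: "Z \<in> obj E" using Z zero_obj_in by auto
  have h1: "idm E A \<in> hom E A A" "mzero E Z A \<in> hom E Z A" "mzero E A Z \<in> hom E A Z"
    using id_hom mzero_hom A Zo by auto
  have "biprod E A Z A (idm E A) (mzero E Z A) (idm E A) (mzero E A Z)"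
    unfolding biprod_def
  proof (intro conjI)
    show "cmp E (idm E A) (idm E A) = idm E A" using idl h1 by simp
    show "cmp E (mzero E A Z) (mzero E Z A) = idm E Z" using zero_cmp_r h1 Zo Z
      by (simp add: zero_obj_def)
    show "cmp E (mzero E A Z) (idm E A) = mzero E A Z" using idr h1 by simp
    show "cmp E (idm E A) (mzero E Z A) = mzero E Z A" using idl h1 by simp
    have "cmp E (mzero E Z A) (mzero E A Z) = mzero E A A" using zero_cmp_r h1 A by simp
    then show "madd E (cmp E (idm E A) (idm E A)) (cmp E (mzero E Z A) (mzero E A Z)) = idm E A"
      using idl h1 madd_0r by simp
  qed (use A h1 in auto)
  then show ?thesis using rz_split by blast
qed

lemma split_id2: assumes B: "B \<in> obj E" and Z: "zero_obj E Z"
  shows "realizes E (ezero E B Z) Z (mzero E Z B) B (idm E B) B"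
proof -
  have Zo: "Z \<in> obj E" using Z zero_obj_in by auto
  have h1: "idm E B \<in> hom E B B" "mzero E Z B \<in> hom E Z B" "mzero E B Z \<in> hom E B Z"
    using id_hom mzero_hom B Zo by auto
  have "biprod E Z B B (mzero E Z B) (idm E B) (mzero E B Z) (idm E B)"
    unfolding biprod_def
  proof (intro conjI)
    show "cmp E (idm E B) (idm E B) = idm E B" using idl h1 by simp
    show "cmp E (mzero E B Z) (mzero E Z B) = idm E Z" using zero_cmp_r h1 Zo Z
      by (simp add: zero_obj_def)
    show "cmp E (mzero E B Z) (idm E B) = mzero E B Z" using idr h1 by simp
    show "cmp E (idm E B) (mzero E Z B) = mzero E Z B" using idl h1 by simp
    have "cmp E (mzero E Z B) (mzero E B Z) = mzero E B B" using zero_cmp_r h1 B by simp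
    then show "madd E (cmp E (mzero E Z B) (mzero E B Z)) (cmp E (idm E B) (idm E B)) = idm E B"
      using idl h1 madd_0l by simp
  qed (use B h1 in auto)
  then show ?thesis using rz_split by blast
qed

lemma tri_zero: assumes T: "realizes E d A x B y C" shows "cmp E y x = mzero E A C"
proof -
  obtain Z where Z: "zero_obj E Z" using zero_exists by blast
  have m: "d \<in> ext E C A" "x \<in> hom E A B" "y \<in> hom E B C" using rz_mem T by auto
  have A: "A \<in> obj E" and C: "C \<in> obj E" using hom_obj m by auto
  have T1: "realizes E (ezero E Z A) A (idm E A) A (mzero E A Z) Z" using split_id A Z by blast
  have "cmp E x (idm E A) = cmp E x (idm E A)" by simp
  then obtain c where c: "c \<in> hom E Z C" "cmp E c (mzero E A Z) = cmp E y x"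
    using ET3[OF T1 T id_hom[OF A] m(2)] by blast
  show ?thesis using c zero_cmp_r A by metis
qed

lemma pull_defl_zero: assumes T: "realizes E d A x B y C" shows "epull E y d = ezero E B A"
proof -
  have m: "d \<in> ext E C A" "x \<in> hom E A B" "y \<in> hom E B C" using rz_mem T by auto
  have A: "A \<in> obj E" and B: "B \<in> obj E" and C: "C \<in> obj E" using hom_obj m by auto
  obtain S i1 i2 p1 p2 where bp: "biprod E A B S i1 i2 p1 p2" using biprod_exists A B by blast
  have bh: "i1 \<in> hom E A S" "i2 \<in> hom E B S" "p1 \<in> hom E S A" "p2 \<in> hom E S B"
    "cmp E p1 i1 = idm E A" "cmp E p2 i2 = idm E B" "cmp E p2 i1 = mzero E A B"
    "cmp E p1 i2 = mzero E B A" using bp unfolding biprod_def by auto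
  have T1: "realizes E (ezero E B A) A i1 S p2 B" using rz_split bp by blast
  define b where "b = madd E (cmp E x p1) p2"
  have xp: "cmp E x p1 \<in> hom E S B" using cmp_hom bh m by blast
  have b: "b \<in> hom E S B" unfolding b_def using madd_hom xp bh by blast
  have e1: "cmp E (cmp E x p1) i1 = x" using assoc[OF bh(1) bh(3) m(2)] bh(5) idr m(2) by simp
  have e2: "cmp E (cmp E x p1) i2 = mzero E B B" using assoc[OF bh(2) bh(3) m(2)] bh(8) zero_cmp_r[OF m(2) B] by simp
  have "cmp E b i1 = madd E (cmp E (cmp E x p1) i1) (cmp E p2 i1)"
    unfolding b_def using distr bh xp by blast
  also have "\<dots> = madd E x (mzero E A B)" using e1 bh(7) by simp
  also have "\<dots> = x" using madd_0r m by blast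
  finally have bi1: "cmp E b i1 = cmp E x (idm E A)" using idr m by simp
  obtain c where c: "c \<in> hom E B C" "epush E (idm E A) (ezero E B A) = epull E c d"
    "cmp E c p2 = cmp E y b"
    using ET3[OF T1 T id_hom[OF A] b bi1] by blast
  have "c = cmp E c (cmp E p2 i2)" using bh idr c by simp
  also have "\<dots> = cmp E (cmp E y b) i2" using assoc[OF bh(2) bh(4) c(1)] c(3) by simp
  also have "\<dots> = cmp E y (cmp E b i2)" using assoc[OF bh(2) b m(3)] by simp
  also have "cmp E b i2 = madd E (cmp E (cmp E x p1) i2) (cmp E p2 i2)"
    unfolding b_def using distr bh xp by blast
  also have "\<dots> = madd E (mzero E B B) (idm E B)" using e2 bh(6) by simp
  also have "\<dots> = idm E B" using madd_0l id_hom B by blast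
  finally have "c = y" using idr m by simp
  then show ?thesis using c push_id ezero_ext A B by metis
qed

section \<open>Exactness\<close>

lemma EX1: assumes T: "realizes E d A x B y C" and h: "h \<in> hom E X B"
  and yh: "cmp E y h = mzero E X C" shows "\<exists>a\<in>hom E X A. cmp E x a = h"
proof -
  obtain Z where Z: "zero_obj E Z" using zero_exists by blast
  have Zo: "Z \<in> obj E" using Z zero_obj_in by auto
  have m: "d \<in> ext E C A" "x \<in> hom E A B" "y \<in> hom E B C" using rz_mem T by auto
  have X: "X \<in> obj E" and C: "C \<in> obj E" using hom_obj m h by auto
  have T1: "realizes E (ezero E Z X) X (idm E X) X (mzero E X Z) Z" using split_id X Z by blast
  have "cmp E y h = cmp E (mzero E Z C) (mzero E X Z)" using yh zero_cmp_r mzero_hom Zo C X by metis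
  then obtain a where "a \<in> hom E X A" "cmp E x a = cmp E h (idm E X)"
    using ET3op[OF T1 T h mzero_hom[OF Zo C]] by blast
  then show ?thesis using idr h by auto
qed

lemma EX1': assumes T: "realizes E d A x B y C" and p: "p \<in> hom E B X"
  and px: "cmp E p x = mzero E A X" shows "\<exists>q\<in>hom E C X. cmp E q y = p"
proof -
  obtain Z where Z: "zero_obj E Z" using zero_exists by blast
  have Zo: "Z \<in> obj E" using Z zero_obj_in by auto
  have m: "d \<in> ext E C A" "x \<in> hom E A B" "y \<in> hom E B C" using rz_mem T by auto
  have X: "X \<in> obj E" and A: "A \<in> obj E" using hom_obj m p by auto
  have T2: "realizes E (ezero E X Z) Z (mzero E Z X) X (idm E X) X" using split_id2 X Z by blast
  have "cmp E p x = cmp E (mzero E Z X) (mzero E A Z)" using px zero_cmp_r mzero_hom Zo A X by metis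
  then obtain q where "q \<in> hom E C X" "cmp E q y = cmp E (idm E X) p"
    using ET3[OF T T2 mzero_hom[OF A Zo] p] by blast
  then show ?thesis using idl p by auto
qed

end

context ge
begin

lemma NIL: assumes T: "realizes E d A x B y C" and ph: "\<phi> \<in> hom E B B"
  and phx: "cmp E \<phi> x = x" and yph: "cmp E y \<phi> = y" shows "is_iso E \<phi>"
proof -
  have m: "d \<in> ext E C A" "x \<in> hom E A B" "y \<in> hom E B C" using rz_mem T by auto
  have B: "B \<in> obj E" using hom_obj ph by auto
  define I where "I = idm E B"
  have I: "I \<in> hom E B B" unfolding I_def using id_hom B by auto
  have nI: "mneg E I \<in> hom E B B" using mneg_hom I by auto
  define \<delta> where "\<delta> = madd E \<phi> (mneg E I)"
  have de: "\<delta> \<in> hom E B B" unfolding \<delta>_def using madd_hom ph nI by auto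
  have "cmp E \<delta> x = madd E (cmp E \<phi> x) (cmp E (mneg E I) x)" unfolding \<delta>_def using distr m(2) ph nI by blast
  also have "\<dots> = madd E x (mneg E x)" using neg_cmp_l[OF m(2) I] idl m(2) phx unfolding I_def by simp
  also have "\<dots> = mzero E A B" using madd_negr m(2) by blast
  finally have dx: "cmp E \<delta> x = mzero E A B" .
  obtain \<psi> where ps: "\<psi> \<in> hom E C B" "cmp E \<psi> y = \<delta>" using EX1'[OF T de dx] by blast
  have "cmp E y \<delta> = madd E (cmp E y \<phi>) (cmp E y (mneg E I))" unfolding \<delta>_def using distl m(3) ph nI by blast
  also have "\<dots> = madd E y (mneg E y)" using neg_cmp_r[OF I m(3)] idr m(3) yph unfolding I_def by simp
  also have "\<dots> = mzero E B C" using madd_negr m(3) by blast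
  finally have yd: "cmp E y \<delta> = mzero E B C" .
  have dd: "cmp E \<delta> \<delta> = mzero E B B"
  proof -
    have "cmp E \<delta> \<delta> = cmp E (cmp E \<psi> y) \<delta>" using ps by simp
    also have "\<dots> = cmp E \<psi> (cmp E y \<delta>)" using assoc[OF de m(3) ps(1)] by simp
    also have "\<dots> = mzero E B B" using yd zero_cmp_r[OF ps(1) B] by simp
    finally show ?thesis .
  qed
  have nd: "mneg E \<delta> \<in> hom E B B" using mneg_hom de by auto
  define g where "g = madd E (mneg E \<delta>) I"
  have g: "g \<in> hom E B B" unfolding g_def using madd_hom nd I by auto
  have phi_eq: "\<phi> = madd E \<delta> I"
  proof -
    have "madd E \<delta> I = madd E \<phi> (madd E (mneg E I) I)" unfolding \<delta>_def using madd_assoc ph nI I by blast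
    also have "\<dots> = \<phi>" using madd_negl I madd_0r ph by simp
    finally show ?thesis by simp
  qed
  have dg: "cmp E \<delta> g = \<delta>"
  proof -
    have "cmp E \<delta> g = madd E (cmp E \<delta> (mneg E \<delta>)) (cmp E \<delta> I)" unfolding g_def using distl nd I de by blast
    also have "\<dots> = madd E (mneg E (mzero E B B)) \<delta>" using neg_cmp_r[OF de de] dd idr de unfolding I_def by simp
    also have "\<dots> = \<delta>" using mneg_zero B madd_0l de by simp
    finally show ?thesis .
  qed
  have gd: "cmp E g \<delta> = \<delta>"
  proof -
    have "cmp E g \<delta> = madd E (cmp E (mneg E \<delta>) \<delta>) (cmp E I \<delta>)" unfolding g_def using distr nd I de by blast
    also have "\<dots> = madd E (mneg E (mzero E B B)) \<delta>" using neg_cmp_l[OF de de] dd idl de unfolding I_def by simp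
    also have "\<dots> = \<delta>" using mneg_zero B madd_0l de by simp
    finally show ?thesis .
  qed
  have dgI: "madd E \<delta> g = I"
  proof -
    have "madd E \<delta> g = madd E (madd E \<delta> (mneg E \<delta>)) I" unfolding g_def using madd_assoc de nd I by simp
    also have "\<dots> = I" using madd_negr de madd_0l I by simp
    finally show ?thesis .
  qed
  have 1: "cmp E \<phi> g = I"
  proof -
    have "cmp E \<phi> g = madd E (cmp E \<delta> g) (cmp E I g)" using phi_eq distr g de I by metis
    also have "\<dots> = I" using dg idl g dgI unfolding I_def by simp
    finally show ?thesis .
  qed
  have 2: "cmp E g \<phi> = I"
  proof -
    have "cmp E g \<phi> = madd E (cmp E g \<delta>) (cmp E g I)" using phi_eq distl g de I by metis
    also have "\<dots> = I" using gd idr g dgI unfolding I_def by simp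
    finally show ?thesis .
  qed
  show ?thesis using iso_intro[OF ph g] 1 2 unfolding I_def by blast
qed

lemma iso_of_cmp: assumes g: "g \<in> hom E Y X" and b: "b \<in> hom E X Y"
  and i1: "is_iso E (cmp E g b)" and i2: "is_iso E (cmp E b g)" shows "is_iso E g"
proof -
  have gb: "cmp E g b \<in> hom E X X" and bg: "cmp E b g \<in> hom E Y Y" using cmp_hom g b by auto
  obtain u where u: "u \<in> hom E X X" "cmp E u (cmp E g b) = idm E X" "cmp E (cmp E g b) u = idm E X"
    using iso_inv[OF gb i1] by blast
  obtain v where v: "v \<in> hom E Y Y" "cmp E v (cmp E b g) = idm E Y" "cmp E (cmp E b g) v = idm E Y"
    using iso_inv[OF bg i2] by blast
  have r: "cmp E b u \<in> hom E X Y" using cmp_hom u b by auto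
  have l: "cmp E v b \<in> hom E X Y" using cmp_hom v b by auto
  have "cmp E g (cmp E b u) = idm E X" using assoc[OF u(1) b g] u by simp
  moreover have "cmp E (cmp E v b) g = idm E Y" using assoc[OF g b v(1)] v by simp
  ultimately show ?thesis using iso_intro2[OF g l r] by simp
qed

lemma EX2: assumes T: "realizes E d A x B y C" and th: "\<theta> \<in> ext E C X"
  and yth: "epull E y \<theta> = ezero E B X" shows "\<exists>a\<in>hom E A X. epush E a d = \<theta>"
proof -
  have m: "d \<in> ext E C A" "x \<in> hom E A B" "y \<in> hom E B C" using rz_mem T by auto
  have X: "X \<in> obj E" and B: "B \<in> obj E" and C: "C \<in> obj E" using ext_obj th hom_obj m by auto
  obtain Y p q where Tq: "realizes E \<theta> X p Y q C" using rz_ex th by blast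
  have mq: "p \<in> hom E X Y" "q \<in> hom E Y C" using rz_mem Tq by auto
  obtain S i1 i2 p1 p2 where bp: "biprod E X B S i1 i2 p1 p2" using biprod_exists X B by blast
  have bh: "i1 \<in> hom E X S" "i2 \<in> hom E B S" "p1 \<in> hom E S X" "p2 \<in> hom E S B"
    "cmp E p2 i2 = idm E B" using bp unfolding biprod_def by auto
  have T1: "realizes E (ezero E B X) X i1 S p2 B" using rz_split bp by blast
  have "epush E (idm E X) (ezero E B X) = epull E y \<theta>" using push_id[OF ezero_ext[OF B X]] yth by simp
  then obtain b where b: "b \<in> hom E S Y" "cmp E q b = cmp E y p2"
    using rz_mor[OF T1 Tq id_hom[OF X] m(3)] by blast
  define s where "s = cmp E b i2"
  have s: "s \<in> hom E B Y" unfolding s_def using cmp_hom bh b by blast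
  have "cmp E q s = cmp E (cmp E q b) i2" unfolding s_def using assoc[OF bh(2) b(1) mq(2)] by simp
  also have "\<dots> = cmp E y (cmp E p2 i2)" using b assoc[OF bh(2) bh(4) m(3)] by simp
  also have "\<dots> = cmp E (idm E C) y" using bh idr m idl by simp
  finally obtain a where a: "a \<in> hom E A X" "epush E a d = epull E (idm E C) \<theta>"
    using ET3op[OF T Tq s id_hom[OF C]] by blast
  then show ?thesis using pull_id th by auto
qed

lemma E0: assumes P: "projective E P" and d: "d \<in> ext E P A" shows "d = ezero E P A"
proof -
  obtain B x y where T: "realizes E d A x B y P" using rz_ex d by blast
  have m: "x \<in> hom E A B" "y \<in> hom E B P" using rz_mem T by auto
  have Po: "P \<in> obj E" and A: "A \<in> obj E" and B: "B \<in> obj E" using ext_obj d hom_obj m by auto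
  obtain s where s: "s \<in> hom E P B" "cmp E y s = idm E P"
    using P id_hom[OF Po] T unfolding projective_def by blast
  have "d = epull E (cmp E y s) d" using s pull_id d by simp
  also have "\<dots> = epull E s (epull E y d)" using pull_cmp s m d by blast
  also have "\<dots> = ezero E P A" using pull_defl_zero[OF T] pull_ezero s A by simp
  finally show ?thesis .
qed

lemma trans_start: assumes T: "realizes E d A x B y C" and a: "a \<in> hom E A' A" and ia: "is_iso E a"
  shows "\<exists>d'. realizes E d' A' (cmp E x a) B y C"
proof -
  have m: "d \<in> ext E C A" "x \<in> hom E A B" "y \<in> hom E B C" using rz_mem T by auto
  have C: "C \<in> obj E" using hom_obj m by auto
  obtain a' where a': "a' \<in> hom E A A'" "cmp E a' a = idm E A'" "cmp E a a' = idm E A"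
    using iso_inv[OF a ia] by blast
  define d' where "d' = epush E a' d"
  have d': "d' \<in> ext E C A'" unfolding d'_def using push_ext a' m by auto
  obtain B' x' y' where T': "realizes E d' A' x' B' y' C" using rz_ex d' by blast
  have m': "x' \<in> hom E A' B'" "y' \<in> hom E B' C" using rz_mem T' by auto
  have "epush E a' d = epull E (idm E C) d'" using d'_def pull_id d' by simp
  then obtain \<beta> where be: "\<beta> \<in> hom E B B'" "cmp E \<beta> x = cmp E x' a'" "cmp E y' \<beta> = cmp E (idm E C) y"
    using rz_mor[OF T T' a'(1) id_hom[OF C]] by blast
  have "epush E a d' = epush E (cmp E a a') d" unfolding d'_def using push_cmp[OF a'(1) a m(1)] by simp
  also have "\<dots> = d" using a' push_id m by simp
  finally have "epush E a d' = epull E (idm E C) d" using pull_id m by simp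
  then obtain \<gamma> where ga: "\<gamma> \<in> hom E B' B" "cmp E \<gamma> x' = cmp E x a" "cmp E y \<gamma> = cmp E (idm E C) y'"
    using rz_mor[OF T' T a id_hom[OF C]] by blast
  have gb: "cmp E \<gamma> \<beta> \<in> hom E B B" using cmp_hom be ga by blast
  have "cmp E (cmp E \<gamma> \<beta>) x = cmp E \<gamma> (cmp E x' a')" using assoc[OF m(2) be(1) ga(1)] be by simp
  also have "\<dots> = cmp E (cmp E x a) a'" using assoc[OF a'(1) m'(1) ga(1)] ga by simp
  also have "\<dots> = x" using assoc[OF a'(1) a m(2)] a' idr m by simp
  finally have 1: "cmp E (cmp E \<gamma> \<beta>) x = x" .
  have "cmp E y (cmp E \<gamma> \<beta>) = cmp E (cmp E y \<gamma>) \<beta>" using assoc[OF be(1) ga(1) m(3)] by simp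
  also have "\<dots> = y" using ga be idl m m' by simp
  finally have 2: "cmp E y (cmp E \<gamma> \<beta>) = y" .
  have bg: "cmp E \<beta> \<gamma> \<in> hom E B' B'" using cmp_hom be ga by blast
  have "cmp E (cmp E \<beta> \<gamma>) x' = cmp E \<beta> (cmp E x a)" using assoc[OF m'(1) ga(1) be(1)] ga by simp
  also have "\<dots> = cmp E (cmp E x' a') a" using assoc[OF a m(2) be(1)] be by simp
  also have "\<dots> = x'" using assoc[OF a a'(1) m'(1)] a' idr m' by simp
  finally have 3: "cmp E (cmp E \<beta> \<gamma>) x' = x'" .
  have "cmp E y' (cmp E \<beta> \<gamma>) = cmp E (cmp E y' \<beta>) \<gamma>" using assoc[OF ga(1) be(1) m'(2)] by simp
  also have "\<dots> = y'" using ga be idl m m' by simp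
  finally have 4: "cmp E y' (cmp E \<beta> \<gamma>) = y'" .
  have "is_iso E \<gamma>" using iso_of_cmp[OF ga(1) be(1) NIL[OF T gb 1 2] NIL[OF T' bg 3 4]] .
  moreover have "cmp E y \<gamma> = y'" using ga idl m' by simp
  moreover have "cmp E x a \<in> hom E A' B" using cmp_hom a m by blast
  ultimately have "realizes E d' A' (cmp E x a) B y C"
    using rz_trans[OF T' _ m(3) ga(1)] ga(2) by blast
  then show ?thesis by blast
qed

lemma trans_end: assumes T: "realizes E d A x B y C" and c: "c \<in> hom E C C'" and ic: "is_iso E c"
  shows "\<exists>d'. realizes E d' A x B (cmp E c y) C'"
proof -
  have m: "d \<in> ext E C A" "x \<in> hom E A B" "y \<in> hom E B C" using rz_mem T by auto
  have A: "A \<in> obj E" using hom_obj m by auto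
  obtain c' where c': "c' \<in> hom E C' C" "cmp E c' c = idm E C" "cmp E c c' = idm E C'"
    using iso_inv[OF c ic] by blast
  define d' where "d' = epull E c' d"
  have d': "d' \<in> ext E C' A" unfolding d'_def using pull_ext c' m by auto
  obtain B' x' y' where T': "realizes E d' A x' B' y' C'" using rz_ex d' by blast
  have m': "x' \<in> hom E A B'" "y' \<in> hom E B' C'" using rz_mem T' by auto
  have "epull E c d' = epull E (cmp E c' c) d" unfolding d'_def using pull_cmp[OF c c'(1) m(1)] by simp
  also have "\<dots> = d" using c' pull_id m by simp
  finally have "epush E (idm E A) d = epull E c d'" using push_id m by simp
  then obtain \<beta> where be: "\<beta> \<in> hom E B B'" "cmp E \<beta> x = cmp E x' (idm E A)" "cmp E y' \<beta> = cmp E c y"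
    using rz_mor[OF T T' id_hom[OF A] c] by blast
  have "epush E (idm E A) d' = epull E c' d" using d'_def push_id d' by simp
  then obtain \<gamma> where ga: "\<gamma> \<in> hom E B' B" "cmp E \<gamma> x' = cmp E x (idm E A)" "cmp E y \<gamma> = cmp E c' y'"
    using rz_mor[OF T' T id_hom[OF A] c'(1)] by blast
  have bx: "cmp E \<beta> x = x'" using be idr m' by simp
  have gx: "cmp E \<gamma> x' = x" using ga idr m by simp
  have gb: "cmp E \<gamma> \<beta> \<in> hom E B B" using cmp_hom be ga by blast
  have 1: "cmp E (cmp E \<gamma> \<beta>) x = x" using assoc[OF m(2) be(1) ga(1)] bx gx by simp
  have "cmp E y (cmp E \<gamma> \<beta>) = cmp E (cmp E c' y') \<beta>" using assoc[OF be(1) ga(1) m(3)] ga by simp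
  also have "\<dots> = cmp E c' (cmp E c y)" using assoc[OF be(1) m'(2) c'(1)] be by simp
  also have "\<dots> = y" using assoc[OF m(3) c c'(1)] c' idl m by simp
  finally have 2: "cmp E y (cmp E \<gamma> \<beta>) = y" .
  have bg: "cmp E \<beta> \<gamma> \<in> hom E B' B'" using cmp_hom be ga by blast
  have 3: "cmp E (cmp E \<beta> \<gamma>) x' = x'" using assoc[OF m'(1) ga(1) be(1)] bx gx by simp
  have "cmp E y' (cmp E \<beta> \<gamma>) = cmp E (cmp E c y) \<gamma>" using assoc[OF ga(1) be(1) m'(2)] be by simp
  also have "\<dots> = cmp E c (cmp E c' y')" using assoc[OF ga(1) m(3) c] ga by simp
  also have "\<dots> = y'" using assoc[OF m'(2) c'(1) c] c' idl m' by simp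
  finally have 4: "cmp E y' (cmp E \<beta> \<gamma>) = y'" .
  have ig: "is_iso E \<gamma>" using iso_of_cmp[OF ga(1) be(1) NIL[OF T gb 1 2] NIL[OF T' bg 3 4]] .
  have cy: "cmp E c y \<in> hom E B C'" using cmp_hom c m by blast
  have "cmp E (cmp E c y) \<gamma> = y'"
    using assoc[OF ga(1) m(3) c] ga assoc[OF m'(2) c'(1) c] c' idl m' by simp
  then have "realizes E d' A x B (cmp E c y) C'"
    using rz_trans[OF T' m(2) cy ga(1) ig gx] by blast
  then show ?thesis by blast
qed

lemma zero_cocone: assumes T: "realizes E d L u M v N" and iv: "is_iso E v" shows "zero_obj E L"
proof -
  have m: "d \<in> ext E N L" "u \<in> hom E L M" "v \<in> hom E M N" using rz_mem T by auto
  have L: "L \<in> obj E" and M: "M \<in> obj E" and N: "N \<in> obj E" using hom_obj m by auto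
  obtain v' where v': "v' \<in> hom E N M" "cmp E v' v = idm E M" "cmp E v v' = idm E N"
    using iso_inv[OF m(3) iv] by blast
  have "u = cmp E (cmp E v' v) u" using v' idl m by simp
  also have "\<dots> = cmp E v' (cmp E v u)" using assoc[OF m(2) m(3) v'(1)] by simp
  also have "\<dots> = mzero E L M" using tri_zero[OF T] zero_cmp_r[OF v'(1) L] by simp
  finally have u0: "u = mzero E L M" .
  have "d = epull E (cmp E v v') d" using v' pull_id m by simp
  also have "\<dots> = epull E v' (epull E v d)" using pull_cmp v' m by blast
  also have "\<dots> = ezero E N L" using pull_defl_zero[OF T] pull_ezero v'(1) L by simp
  finally have d0: "d = ezero E N L" .
  obtain S i1 i2 p1 p2 where bp: "biprod E L N S i1 i2 p1 p2" using biprod_exists L N by blast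
  have bh: "i1 \<in> hom E L S" "p1 \<in> hom E S L" "cmp E p1 i1 = idm E L" using bp unfolding biprod_def by auto
  have T1: "realizes E (ezero E N L) L i1 S p2 N" using rz_split bp by blast
  obtain b where b: "b \<in> hom E S M" "is_iso E b" "cmp E b i1 = u" using rz_iso[OF T1 T[unfolded d0]] by blast
  obtain b' where b': "b' \<in> hom E M S" "cmp E b' b = idm E S" using iso_inv[OF b(1) b(2)] by blast
  have "i1 = cmp E (cmp E b' b) i1" using b' idl bh by simp
  also have "\<dots> = cmp E b' u" using assoc[OF bh(1) b(1) b'(1)] b by simp
  also have "\<dots> = mzero E L S" using u0 zero_cmp_r[OF b'(1) L] by simp
  finally have "idm E L = mzero E L L" using bh zero_cmp_r[OF bh(2) L] by simp
  then show ?thesis using L unfolding zero_obj_def by simp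
qed

section \<open>Projectives\<close>

lemma proj_obj: "projective E P \<Longrightarrow> P \<in> obj E" by (simp add: projective_def)

lemma proj_iso: assumes P: "projective E P" and f: "f \<in> hom E P Q" and i: "is_iso E f"
  shows "projective E Q"
proof -
  obtain f' where f': "f' \<in> hom E Q P" "cmp E f f' = idm E Q" using iso_inv[OF f i] by blast
  have Q: "Q \<in> obj E" using hom_obj f by auto
  have "\<exists>b\<in>hom E Q B. cmp E y b = c" if T: "realizes E d A x B y C" and c: "c \<in> hom E Q C" for d A x B y C c
  proof -
    have cf: "cmp E c f \<in> hom E P C" using cmp_hom f c by blast
    obtain b where b: "b \<in> hom E P B" "cmp E y b = cmp E c f" using P T cf unfolding projective_def by blast
    have m: "y \<in> hom E B C" using rz_mem T by auto
    have "cmp E y (cmp E b f') = cmp E (cmp E c f) f'" using assoc[OF f'(1) b(1) m] b by simp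
    also have "\<dots> = c" using assoc[OF f'(1) f c] f' idr c by simp
    finally show ?thesis using cmp_hom f'(1) b(1) by blast
  qed
  then show ?thesis using Q unfolding projective_def by blast
qed

lemma proj_biprod: assumes bp: "biprod E X1 X2 S i1 i2 p1 p2" and P1: "projective E X1"
  and P2: "projective E X2" shows "projective E S"
proof -
  have bh: "S \<in> obj E" "i1 \<in> hom E X1 S" "i2 \<in> hom E X2 S" "p1 \<in> hom E S X1" "p2 \<in> hom E S X2"
    "madd E (cmp E i1 p1) (cmp E i2 p2) = idm E S" using bp unfolding biprod_def by auto
  have "\<exists>b\<in>hom E S B. cmp E y b = c" if T: "realizes E d A x B y C" and c: "c \<in> hom E S C" for d A x B y C c
  proof -
    have m: "y \<in> hom E B C" using rz_mem T by auto
    have c1: "cmp E c i1 \<in> hom E X1 C" and c2: "cmp E c i2 \<in> hom E X2 C" using cmp_hom bh c by auto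
    obtain b1 where b1: "b1 \<in> hom E X1 B" "cmp E y b1 = cmp E c i1" using P1 T c1 unfolding projective_def by blast
    obtain b2 where b2: "b2 \<in> hom E X2 B" "cmp E y b2 = cmp E c i2" using P2 T c2 unfolding projective_def by blast
    have h1: "cmp E b1 p1 \<in> hom E S B" and h2: "cmp E b2 p2 \<in> hom E S B" using cmp_hom bh b1 b2 by auto
    have ip1: "cmp E i1 p1 \<in> hom E S S" and ip2: "cmp E i2 p2 \<in> hom E S S" using cmp_hom bh by auto
    have "cmp E y (madd E (cmp E b1 p1) (cmp E b2 p2)) = madd E (cmp E y (cmp E b1 p1)) (cmp E y (cmp E b2 p2))"
      using distl h1 h2 m by blast
    also have "\<dots> = madd E (cmp E c (cmp E i1 p1)) (cmp E c (cmp E i2 p2))"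
      using assoc[OF bh(4) b1(1) m] assoc[OF bh(5) b2(1) m] b1 b2 assoc[OF bh(4) bh(2) c] assoc[OF bh(5) bh(3) c] by simp
    also have "\<dots> = cmp E c (idm E S)" using distl[OF ip1 ip2 c] bh by simp
    also have "\<dots> = c" using idr c by simp
    finally show ?thesis using madd_hom h1 h2 by blast
  qed
  then show ?thesis using bh unfolding projective_def by blast
qed

lemma zero_proj: assumes Z: "zero_obj E Z" shows "projective E Z"
proof -
  have Zo: "Z \<in> obj E" using Z zero_obj_in by auto
  have "\<exists>b\<in>hom E Z B. cmp E y b = c" if T: "realizes E d A x B y C" and c: "c \<in> hom E Z C" for d A x B y C c
  proof -
    have m: "y \<in> hom E B C" using rz_mem T by auto
    have B: "B \<in> obj E" using hom_obj m by auto
    have "cmp E y (mzero E Z B) = c" using zero_cmp_r[OF m Zo] zero_obj_from[OF Z c] by simp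
    then show ?thesis using mzero_hom Zo B by blast
  qed
  then show ?thesis using Zo unfolding projective_def by blast
qed

end

context ge
begin

lemma pr0: "projective E P \<Longrightarrow> proj_res E P 0"
  unfolding proj_res_def by (rule exI[of _ "\<lambda>_. P"], rule exI[of _ "\<lambda>_. P"]) auto

lemma pr0_proj: "proj_res E C 0 \<Longrightarrow> projective E C"
  unfolding proj_res_def by auto

lemma pr_cons: assumes T: "realizes E d K1 g X0 f C" and P: "projective E X0" and R: "proj_res E K1 n"
  shows "proj_res E C (Suc n)"
proof -
  obtain K X where KX: "K 0 = K1" "K n = X n" "\<forall>i<n. \<exists>d g f. realizes E d (K (Suc i)) g (X i) f (K i)"
    "\<forall>i\<le>n. projective E (X i)" using R unfolding proj_res_def by blast
  define K' where "K' = (\<lambda>i. if i = 0 then C else K (i - 1))"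
  define X' where "X' = (\<lambda>i. if i = 0 then X0 else X (i - 1))"
  have "K' 0 = C" "K' (Suc n) = X' (Suc n)" using KX unfolding K'_def X'_def by auto
  moreover have "\<forall>i<Suc n. \<exists>d g f. realizes E d (K' (Suc i)) g (X' i) f (K' i)"
  proof (intro allI impI)
    fix i assume i: "i < Suc n"
    show "\<exists>d g f. realizes E d (K' (Suc i)) g (X' i) f (K' i)"
    proof (cases i)
      case 0 then show ?thesis using T KX unfolding K'_def X'_def by auto
    next
      case (Suc j)
      then have "j < n" using i by simp
      then obtain d g f where "realizes E d (K (Suc j)) g (X j) f (K j)" using KX(3) by blast
      then show ?thesis using Suc unfolding K'_def X'_def by auto
    qed
  qed
  moreover have "\<forall>i\<le>Suc n. projective E (X' i)"
  proof (intro allI impI)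
    fix i assume i: "i \<le> Suc n"
    show "projective E (X' i)"
    proof (cases i)
      case 0 then show ?thesis using P unfolding X'_def by simp
    next
      case (Suc j) then have "j \<le> n" using i by simp
      then show ?thesis using KX(4) Suc unfolding X'_def by simp
    qed
  qed
  ultimately show ?thesis unfolding proj_res_def by blast
qed

lemma pr_tail: assumes R: "proj_res E C (Suc n)"
  shows "\<exists>d K1 g X0 f. realizes E d K1 g X0 f C \<and> projective E X0 \<and> proj_res E K1 n"
proof -
  obtain K X where KX: "K 0 = C" "K (Suc n) = X (Suc n)" "\<forall>i<Suc n. \<exists>d g f. realizes E d (K (Suc i)) g (X i) f (K i)"
    "\<forall>i\<le>Suc n. projective E (X i)" using R unfolding proj_res_def by blast
  obtain d g f where T0: "realizes E d (K (Suc 0)) g (X 0) f (K 0)" using KX(3) by blast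
  have T: "realizes E d (K 1) g (X 0) f C" using T0 KX(1) by simp
  have "proj_res E (K 1) n" unfolding proj_res_def
  proof (rule exI[of _ "\<lambda>i. K (Suc i)"], rule exI[of _ "\<lambda>i. X (Suc i)"], intro conjI allI impI)
    show "K (Suc 0) = K 1" by simp
    show "K (Suc n) = X (Suc n)" using KX(2) .
    fix i
    show "i < n \<Longrightarrow> \<exists>d g f. realizes E d (K (Suc (Suc i))) g (X (Suc i)) f (K (Suc i))"
      using KX(3) by simp
    show "i \<le> n \<Longrightarrow> projective E (X (Suc i))" using KX(4) by simp
  qed
  then show ?thesis using T KX(4) by blast
qed

lemma pr_pad0: assumes "proj_res E C 0" shows "proj_res E C (Suc 0)"
proof -
  have P: "projective E C" using pr0_proj assms by blast
  obtain Z where Z: "zero_obj E Z" using zero_exists by blast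
  have T: "realizes E (ezero E C Z) Z (mzero E Z C) C (idm E C) C" using split_id2[OF proj_obj[OF P] Z] .
  show ?thesis using pr_cons[OF T P pr0[OF zero_proj[OF Z]]] .
qed
lemma pr_padS: assumes IH: "\<And>C. proj_res E C n \<Longrightarrow> proj_res E C (Suc n)" and R: "proj_res E C (Suc n)"
  shows "proj_res E C (Suc (Suc n))"
proof -
  obtain d K1 g X0 f where T0: "realizes E d K1 g X0 f C \<and> projective E X0 \<and> proj_res E K1 n"
    using pr_tail[OF R] by (elim exE) (rule that)
  have T: "realizes E d K1 g X0 f C" "projective E X0" "proj_res E K1 n" using T0 by auto
  show ?thesis using pr_cons[OF T(1) T(2) IH[OF T(3)]] .
qed

lemma pr_pad: "proj_res E C n \<Longrightarrow> proj_res E C (Suc n)"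
proof (induct n arbitrary: C)
  case 0 then show ?case by (rule pr_pad0)
next
  case (Suc n C) then show ?case by (rule pr_padS)
qed

lemma pr_mono: "proj_res E C n \<Longrightarrow> n \<le> m \<Longrightarrow> proj_res E C m"
proof (induction m)
  case 0 then show ?case by simp
next
  case (Suc m)
  show ?case
  proof (cases "n = Suc m")
    case True then show ?thesis using Suc.prems by simp
  next
    case False then have "n \<le> m" using Suc.prems by simp
    then show ?thesis using pr_pad[OF Suc.IH[OF Suc.prems(1)]] by simp
  qed
qed

lemma pr_iso: "proj_res E C n \<Longrightarrow> c \<in> hom E C C' \<Longrightarrow> is_iso E c \<Longrightarrow> proj_res E C' n"
proof (cases n)
  case 0
  assume "proj_res E C n" "c \<in> hom E C C'" "is_iso E c"
  then show ?thesis using 0 pr0[OF proj_iso[OF pr0_proj]] by simp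
next
  case (Suc m)
  assume R: "proj_res E C n" and c: "c \<in> hom E C C'" and i: "is_iso E c"
  have R': "proj_res E C (Suc m)" using R Suc by simp
  obtain d K1 g X0 f where T0: "realizes E d K1 g X0 f C \<and> projective E X0 \<and> proj_res E K1 m"
    using pr_tail[OF R'] by (elim exE) (rule that)
  have T: "realizes E d K1 g X0 f C" "projective E X0" "proj_res E K1 m" using T0 by auto
  obtain d' where "realizes E d' K1 g X0 (cmp E c f) C'" using trans_end[OF T(1) c i] by blast
  then show ?thesis using pr_cons[OF _ T(2) T(3)] Suc by simp
qed

lemma pd_le: assumes R: "proj_res E C n" shows "pd E C \<le> enat n"
proof -
  have ex: "\<exists>k. proj_res E C k" using R by blast
  have "(LEAST k. proj_res E C k) \<le> n" using Least_le[of "proj_res E C" n] R by blast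
  then show ?thesis unfolding pd_def using ex by simp
qed

lemma pd_enat: assumes p: "pd E C = enat n" shows "proj_res E C n"
proof (cases "\<exists>k. proj_res E C k")
  case True
  then have "pd E C = enat (LEAST k. proj_res E C k)" unfolding pd_def by simp
  then have "n = (LEAST k. proj_res E C k)" using p by simp
  then show ?thesis using LeastI_ex[OF True] by simp
next
  case False then have "pd E C = \<infinity>" unfolding pd_def by simp
  then show ?thesis using p by simp
qed

lemma pd_le_res: assumes le: "pd E C \<le> enat n" shows "proj_res E C n"
proof (cases "\<exists>k. proj_res E C k")
  case True
  then have p: "pd E C = enat (LEAST k. proj_res E C k)" unfolding pd_def by simp
  have 1: "proj_res E C (LEAST k. proj_res E C k)" using pd_enat[OF p] .
  have 2: "(LEAST k. proj_res E C k) \<le> n" using le unfolding p by simp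
  show ?thesis using pr_mono[OF 1 2] .
next
  case False then have "pd E C = \<infinity>" unfolding pd_def by simp
  then show ?thesis using le by simp
qed

end

context ge
begin

lemma biprod_zero: assumes A: "A \<in> obj E" and Z: "zero_obj E Z"
  shows "biprod E A Z A (idm E A) (mzero E Z A) (idm E A) (mzero E A Z)"
proof -
  have Zo: "Z \<in> obj E" using Z zero_obj_in by auto
  have h1: "idm E A \<in> hom E A A" "mzero E Z A \<in> hom E Z A" "mzero E A Z \<in> hom E A Z"
    using id_hom mzero_hom A Zo by auto
  show ?thesis
    unfolding biprod_def
  proof (intro conjI)
    show "cmp E (idm E A) (idm E A) = idm E A" using idl h1 by simp
    show "cmp E (mzero E A Z) (mzero E Z A) = idm E Z" using zero_cmp_r h1 Zo Z
      by (simp add: zero_obj_def)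
    show "cmp E (mzero E A Z) (idm E A) = mzero E A Z" using idr h1 by simp
    show "cmp E (idm E A) (mzero E Z A) = mzero E Z A" using idl h1 by simp
    have "cmp E (mzero E Z A) (mzero E A Z) = mzero E A A" using zero_cmp_r h1 A by simp
    then show "madd E (cmp E (idm E A) (idm E A)) (cmp E (mzero E Z A) (mzero E A Z)) = idm E A"
      using idl h1 madd_0r by simp
  qed (use A h1 in auto)
qed

lemma biprod_swap: assumes "biprod E X1 X2 S i1 i2 p1 p2" shows "biprod E X2 X1 S i2 i1 p2 p1"
proof -
  have h: "i1 \<in> hom E X1 S" "i2 \<in> hom E X2 S" "p1 \<in> hom E S X1" "p2 \<in> hom E S X2"
    using assms unfolding biprod_def by auto
  have "madd E (cmp E i1 p1) (cmp E i2 p2) = madd E (cmp E i2 p2) (cmp E i1 p1)"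
    using madd_comm cmp_hom h by blast
  then show ?thesis using assms unfolding biprod_def by auto
qed

lemma split_biprod: assumes T: "realizes E \<theta> F \<alpha> M \<beta> P" and P: "projective E P"
  shows "\<exists>s r. biprod E F P M \<alpha> s r \<beta>"
proof -
  have m: "\<theta> \<in> ext E P F" "\<alpha> \<in> hom E F M" "\<beta> \<in> hom E M P" using rz_mem T by auto
  have F: "F \<in> obj E" and M: "M \<in> obj E" and Po: "P \<in> obj E" using hom_obj m by auto
  have th: "\<theta> = ezero E P F" using E0[OF P m(1)] .
  obtain S i1 i2 p1 p2 where bp: "biprod E F P S i1 i2 p1 p2" using biprod_exists F Po by blast
  have bh: "S \<in> obj E" "i1 \<in> hom E F S" "i2 \<in> hom E P S" "p1 \<in> hom E S F" "p2 \<in> hom E S P"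
    "cmp E p1 i1 = idm E F" "cmp E p2 i2 = idm E P" "cmp E p2 i1 = mzero E F P" "cmp E p1 i2 = mzero E P F"
    "madd E (cmp E i1 p1) (cmp E i2 p2) = idm E S" using bp unfolding biprod_def by auto
  have T1: "realizes E (ezero E P F) F i1 S p2 P" using rz_split bp by blast
  obtain b where b: "b \<in> hom E S M" "is_iso E b" "cmp E b i1 = \<alpha>" "cmp E \<beta> b = p2"
    using rz_iso[OF T1 T[unfolded th]] by blast
  obtain b' where b': "b' \<in> hom E M S" "cmp E b' b = idm E S" "cmp E b b' = idm E M"
    using iso_inv[OF b(1) b(2)] by blast
  define s where "s = cmp E b i2"
  define r where "r = cmp E p1 b'"
  have s: "s \<in> hom E P M" unfolding s_def using cmp_hom bh b by blast
  have r: "r \<in> hom E M F" unfolding r_def using cmp_hom bh b' by blast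
  have be: "\<beta> = cmp E p2 b'"
  proof -
    have "\<beta> = cmp E \<beta> (cmp E b b')" using b' idr m by simp
    also have "\<dots> = cmp E p2 b'" using assoc[OF b'(1) b(1) m(3)] b by simp
    finally show ?thesis .
  qed
  have bb: "\<And>X f. f \<in> hom E X S \<Longrightarrow> cmp E b' (cmp E b f) = f"
  proof -
    fix X f assume f: "f \<in> hom E X S"
    show "cmp E b' (cmp E b f) = f" using assoc[OF f b(1) b'(1)] b'(2) idl[OF f] by simp
  qed
  have bi1: "cmp E b i1 \<in> hom E F M" and bi2: "cmp E b i2 \<in> hom E P M" using cmp_hom bh b by auto
  have pb: "cmp E p1 b' \<in> hom E M F" and pb2: "cmp E p2 b' \<in> hom E M P" using cmp_hom bh b' by auto
  have "cmp E r \<alpha> = cmp E p1 (cmp E b' (cmp E b i1))" unfolding r_def using b(3) assoc[OF bi1 b'(1) bh(4)] by simp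
  also have "\<dots> = idm E F" using bb[OF bh(2)] bh by simp
  finally have "cmp E r \<alpha> = idm E F" .
  moreover have "cmp E \<beta> s = idm E P" unfolding s_def using assoc[OF bh(3) b(1) m(3)] b bh by simp
  moreover have "cmp E \<beta> \<alpha> = mzero E F P" using b(3)[symmetric] assoc[OF bh(2) b(1) m(3)] b bh by simp
  moreover have "cmp E r s = mzero E P F"
  proof -
    have "cmp E r s = cmp E p1 (cmp E b' (cmp E b i2))" unfolding r_def s_def using assoc[OF bi2 b'(1) bh(4)] by simp
    also have "\<dots> = mzero E P F" using bb[OF bh(3)] bh by simp
    finally show ?thesis .
  qed
  moreover have "madd E (cmp E \<alpha> r) (cmp E s \<beta>) = idm E M"
  proof -
    have i1p1: "cmp E i1 p1 \<in> hom E S S" and i2p2: "cmp E i2 p2 \<in> hom E S S" using cmp_hom bh by auto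
    have "cmp E \<alpha> r = cmp E b (cmp E (cmp E i1 p1) b')" unfolding r_def using b(3)[symmetric]
      assoc[OF pb bh(2) b(1)] assoc[OF b'(1) bh(4) bh(2)] by simp
    moreover have "cmp E s \<beta> = cmp E b (cmp E (cmp E i2 p2) b')" unfolding s_def using be
      assoc[OF pb2 bh(3) b(1)] assoc[OF b'(1) bh(5) bh(3)] by simp
    ultimately have "madd E (cmp E \<alpha> r) (cmp E s \<beta>) = cmp E b (cmp E (madd E (cmp E i1 p1) (cmp E i2 p2)) b')"
      using distl[OF cmp_hom[OF b'(1) i1p1] cmp_hom[OF b'(1) i2p2] b(1)] distr[OF b'(1) i1p1 i2p2] by simp
    also have "\<dots> = idm E M" using bh(10) idl b' by simp
    finally show ?thesis .
  qed
  ultimately have "biprod E F P M \<alpha> s r \<beta>" unfolding biprod_def using M m s r by auto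
  then show ?thesis by blast
qed

lemma G0: assumes T: "realizes E \<theta> F \<alpha> M \<beta> L" and PF: "projective E F" and PL: "projective E L"
  shows "projective E M"
  using split_biprod[OF T PL] proj_biprod PF PL by blast

lemma split_res: assumes T: "realizes E \<theta> F \<alpha> M \<beta> P" and P: "projective E P" and R: "proj_res E F r"
  shows "proj_res E M r"
proof (cases r)
  case 0
  then show ?thesis using G0[OF T pr0_proj P] R pr0 by simp
next
  case (Suc k)
  have R': "proj_res E F (Suc k)" using R Suc by simp
  obtain dF K1 i X0 p where T0: "realizes E dF K1 i X0 p F \<and> projective E X0 \<and> proj_res E K1 k"
    using pr_tail[OF R'] by (elim exE) (rule that)
  have TF: "realizes E dF K1 i X0 p F" and PX: "projective E X0" and RK: "proj_res E K1 k" using T0 by auto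
  obtain s rr where bpM: "biprod E F P M \<alpha> s rr \<beta>" using split_biprod[OF T P] by blast
  have bM: "s \<in> hom E P M" "rr \<in> hom E M F" "cmp E rr \<alpha> = idm E F" "cmp E rr s = mzero E P F"
    "\<alpha> \<in> hom E F M" using bpM unfolding biprod_def by auto
  have mF: "dF \<in> ext E F K1" "i \<in> hom E K1 X0" "p \<in> hom E X0 F" using rz_mem TF by auto
  have K1: "K1 \<in> obj E" and X0: "X0 \<in> obj E" using hom_obj mF by auto
  have Po: "P \<in> obj E" using proj_obj P by auto
  obtain Z where Z: "zero_obj E Z" using zero_exists by blast
  have Zo: "Z \<in> obj E" using Z zero_obj_in by auto
  have TZ: "realizes E (ezero E P Z) Z (mzero E Z P) P (idm E P) P" using split_id2[OF Po Z] .
  have bA: "biprod E K1 Z K1 (idm E K1) (mzero E Z K1) (idm E K1) (mzero E K1 Z)" using biprod_zero[OF K1 Z] .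
  obtain SB ib1 ib2 pb1 pb2 where bB: "biprod E X0 P SB ib1 ib2 pb1 pb2" using biprod_exists X0 Po by blast
  define e where "e = epull E rr dF"
  have e: "e \<in> ext E M K1" unfolding e_def using pull_ext bM mF by blast
  have ea: "epull E \<alpha> e \<in> ext E F K1" and es: "epull E s e \<in> ext E P K1" using pull_ext bM e by auto
  have c1: "epush E (idm E K1) (epull E \<alpha> e) = dF"
    unfolding e_def using push_id[OF ea[unfolded e_def]] pull_cmp[OF bM(5) bM(2) mF(1)] bM(3) pull_id mF(1) by simp
  have c2: "epush E (mzero E K1 Z) (epull E s e) = ezero E P Z" using push_mzero[OF es Zo] .
  have c3: "epush E (idm E K1) (epull E s e) = ezero E P K1"
    unfolding e_def using push_id[OF es[unfolded e_def]] pull_cmp[OF bM(1) bM(2) mF(1)] bM(4) pull_mzero[OF mF(1) Po] by simp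
  have c4: "epush E (mzero E K1 Z) (epull E \<alpha> e) = ezero E F Z" using push_mzero[OF ea Zo] .
  obtain x' y' where TS: "realizes E e K1 x' SB y' M"
    using rz_sum[OF TF TZ bA bB bpM e c1 c2 c3 c4] by blast
  have PSB: "projective E SB" using proj_biprod[OF bB PX P] .
  show ?thesis using pr_cons[OF TS PSB RK] Suc by simp
qed

lemma cone: assumes Gk: "\<And>\<theta> F \<alpha> W \<beta> L. realizes E \<theta> F \<alpha> W \<beta> L \<Longrightarrow> proj_res E F k \<Longrightarrow> proj_res E L k \<Longrightarrow> proj_res E W k"
  and T: "realizes E d L u M v N" and RL: "proj_res E L a" and ak: "a \<le> k" and RM: "proj_res E M (Suc k)"
  shows "proj_res E N (Suc k)"
proof -
  obtain dM K1 i X0 p where T0: "realizes E dM K1 i X0 p M \<and> projective E X0 \<and> proj_res E K1 k"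
    using pr_tail[OF RM] by (elim exE) (rule that)
  have TM: "realizes E dM K1 i X0 p M" and PX: "projective E X0" and RK: "proj_res E K1 k" using T0 by auto
  obtain Eo h' dd e d'' where R: "realizes E d'' Eo h' X0 (cmp E v p) N"
    "realizes E (epull E u dM) K1 e Eo dd L" using ET4op[OF T TM] by blast
  have "proj_res E Eo k" using Gk[OF R(2) RK pr_mono[OF RL ak]] .
  then show ?thesis using pr_cons[OF R(1) PX] by blast
qed

end

context ge
begin

lemma PB: assumes T1: "realizes E \<delta>1 A1 x1 B1 y1 C" and T2: "realizes E \<delta>2 A2 x2 B2 y2 C"
  shows "\<exists>M m1 e2 m2 e3 Eo2 dA dB b. realizes E dA A1 m1 M e2 B2 \<and> realizes E dB A2 m2 M e3 Eo2 \<and>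
           b \<in> hom E B1 Eo2 \<and> is_iso E b"
proof -
  have mT1: "\<delta>1 \<in> ext E C A1" "x1 \<in> hom E A1 B1" "y1 \<in> hom E B1 C" using rz_mem T1 by auto
  have mT2: "\<delta>2 \<in> ext E C A2" "x2 \<in> hom E A2 B2" "y2 \<in> hom E B2 C" using rz_mem T2 by auto
  have A1: "A1 \<in> obj E" and A2: "A2 \<in> obj E" and B2: "B2 \<in> obj E" and C: "C \<in> obj E"
    using hom_obj mT1 mT2 by auto
  define \<theta>1 where "\<theta>1 = epull E y2 \<delta>1"
  have th1: "\<theta>1 \<in> ext E B2 A1" unfolding \<theta>1_def using pull_ext mT2 mT1 by blast
  obtain M m1 e2 where T3: "realizes E \<theta>1 A1 m1 M e2 B2" using rz_ex th1 by blast
  have mT3: "m1 \<in> hom E A1 M" "e2 \<in> hom E M B2" using rz_mem T3 by auto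
  obtain Eo h' dd e d'' where R1: "realizes E d'' Eo h' M (cmp E y2 e2) C"
    and R2: "realizes E (epull E x2 \<theta>1) A1 e Eo dd A2"
    and c3: "epush E dd d'' = \<delta>2" and c4: "epull E y2 d'' = epush E e \<theta>1"
    using ET4op[OF T2 T3] by blast
  have mR1: "d'' \<in> ext E C Eo" "h' \<in> hom E Eo M" using rz_mem R1 by auto
  have mR2: "e \<in> hom E A1 Eo" "dd \<in> hom E Eo A2" using rz_mem R2 by auto
  have Eo: "Eo \<in> obj E" using hom_obj mR2 by auto
  have "epull E x2 \<theta>1 = epull E (cmp E y2 x2) \<delta>1" unfolding \<theta>1_def using pull_cmp[OF mT2(2) mT2(3) mT1(1)] by simp
  also have "\<dots> = ezero E A2 A1" using tri_zero[OF T2] pull_mzero[OF mT1(1) A2] by simp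
  finally have R2': "realizes E (ezero E A2 A1) A1 e Eo dd A2" using R2 by simp
  have dde: "cmp E dd e = mzero E A1 A2" using tri_zero[OF R2'] .
  obtain S i1 i2 p1 p2 where bp: "biprod E A1 A2 S i1 i2 p1 p2" using biprod_exists A1 A2 by blast
  have bh: "i1 \<in> hom E A1 S" "i2 \<in> hom E A2 S" "p1 \<in> hom E S A1" "p2 \<in> hom E S A2"
    "cmp E p1 i1 = idm E A1" using bp unfolding biprod_def by auto
  have TS: "realizes E (ezero E A2 A1) A1 i1 S p2 A2" using rz_split bp by blast
  obtain b0 where b0: "b0 \<in> hom E S Eo" "is_iso E b0" "cmp E b0 i1 = e" "cmp E dd b0 = p2"
    using rz_iso[OF TS R2'] by blast
  obtain b0' where b0': "b0' \<in> hom E Eo S" "cmp E b0' b0 = idm E S" "cmp E b0 b0' = idm E Eo"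
    using iso_inv[OF b0(1) b0(2)] by blast
  define \<rho> where "\<rho> = cmp E p1 b0'"
  have rho: "\<rho> \<in> hom E Eo A1" unfolding \<rho>_def using cmp_hom bh b0' by blast
  have rhoe: "cmp E \<rho> e = idm E A1"
  proof -
    have "cmp E \<rho> e = cmp E p1 (cmp E b0' (cmp E b0 i1))" unfolding \<rho>_def
      using b0(3) assoc[OF mR2(1) b0'(1) bh(3)] by simp
    also have "\<dots> = idm E A1" using assoc[OF bh(1) b0(1) b0'(1)] b0' idl bh by simp
    finally show ?thesis .
  qed
  have rhob0: "cmp E \<rho> b0 = p1" unfolding \<rho>_def using assoc[OF b0(1) b0'(1) bh(3)] b0' idr bh by simp
  define e\<delta>1 where "e\<delta>1 = epush E e \<delta>1"
  have ed1: "e\<delta>1 \<in> ext E C Eo" unfolding e\<delta>1_def using push_ext mR2 mT1 by blast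
  define \<theta> where "\<theta> = eadd E d'' (eneg E e\<delta>1)"
  have th: "\<theta> \<in> ext E C Eo" unfolding \<theta>_def using eadd_ext eneg_ext mR1 ed1 by blast
  have X: "epush E e \<theta>1 \<in> ext E B2 Eo" using push_ext mR2 th1 by blast
  have "epull E y2 \<theta> = eadd E (epull E y2 d'') (epull E y2 (eneg E e\<delta>1))"
    unfolding \<theta>_def using pull_add[OF mT2(3) mR1(1) eneg_ext[OF ed1]] .
  also have "\<dots> = eadd E (epush E e \<theta>1) (eneg E (epush E e \<theta>1))"
    using c4 pull_eneg[OF mT2(3) ed1] push_pull[OF mT2(3) mR2(1) mT1(1)] unfolding e\<delta>1_def \<theta>1_def by simp
  also have "\<dots> = ezero E B2 Eo" using eadd_negr X by blast
  finally have yth: "epull E y2 \<theta> = ezero E B2 Eo" .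
  obtain \<tau>' where tau': "\<tau>' \<in> hom E A2 Eo" "epush E \<tau>' \<delta>2 = \<theta>" using EX2[OF T2 th yth] by blast
  have d''eq: "d'' = eadd E (epush E \<tau>' \<delta>2) e\<delta>1"
  proof -
    have "eadd E \<theta> e\<delta>1 = eadd E d'' (eadd E (eneg E e\<delta>1) e\<delta>1)"
      unfolding \<theta>_def using eadd_assoc mR1 eneg_ext ed1 by blast
    also have "\<dots> = d''" using eadd_negl ed1 eadd_0r mR1 by simp
    finally show ?thesis using tau' by simp
  qed
  define \<tau> where "\<tau> = cmp E \<rho> \<tau>'"
  have tau: "\<tau> \<in> hom E A2 A1" unfolding \<tau>_def using cmp_hom tau' rho by blast
  define td where "td = cmp E \<tau> dd"
  have td: "td \<in> hom E Eo A1" unfolding td_def using cmp_hom tau mR2 by blast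
  define N where "N = cmp E e td"
  have N: "N \<in> hom E Eo Eo" unfolding N_def using cmp_hom td mR2 by blast
  define \<psi> where "\<psi> = madd E (idm E Eo) N"
  have psi: "\<psi> \<in> hom E Eo Eo" unfolding \<psi>_def using madd_hom id_hom Eo N by blast
  have tde: "cmp E td e = mzero E A1 A1"
    unfolding td_def using assoc[OF mR2(1) mR2(2) tau] dde zero_cmp_r[OF tau A1] by simp
  have Ne: "cmp E N e = mzero E A1 Eo"
    unfolding N_def using assoc[OF mR2(1) td mR2(1)] tde zero_cmp_r[OF mR2(1) A1] by simp
  have psie: "cmp E \<psi> e = e"
    unfolding \<psi>_def using distr[OF mR2(1) id_hom[OF Eo] N] idl mR2 Ne madd_0r by simp
  have ddN: "cmp E dd N = mzero E Eo A2"
    unfolding N_def using assoc[OF td mR2(1) mR2(2)] dde zero_cmp_l[OF td A2] by simp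
  have ddpsi: "cmp E dd \<psi> = dd"
    unfolding \<psi>_def using distl[OF id_hom[OF Eo] N mR2(2)] idr mR2 ddN madd_0r by simp
  have isopsi: "is_iso E \<psi>" using NIL[OF R2' psi psie ddpsi] .
  define \<rho>' where "\<rho>' = madd E \<rho> (mneg E td)"
  have ntd: "mneg E td \<in> hom E Eo A1" using mneg_hom td by blast
  have rho': "\<rho>' \<in> hom E Eo A1" unfolding \<rho>'_def using madd_hom rho ntd by blast
  have rho'e: "cmp E \<rho>' e = idm E A1"
  proof -
    have "cmp E \<rho>' e = madd E (cmp E \<rho> e) (cmp E (mneg E td) e)"
      unfolding \<rho>'_def using distr[OF mR2(1) rho ntd] .
    also have "\<dots> = madd E (idm E A1) (mzero E A1 A1)"
      using rhoe neg_cmp_l[OF mR2(1) td] tde mneg_zero A1 by simp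
    also have "\<dots> = idm E A1" using madd_0r id_hom A1 by blast
    finally show ?thesis .
  qed
  have rho'N: "cmp E \<rho>' N = td" unfolding N_def using assoc[OF td mR2(1) rho'] rho'e idl td by simp
  have rho'psi: "cmp E \<rho>' \<psi> = \<rho>"
  proof -
    have "cmp E \<rho>' \<psi> = madd E (cmp E \<rho>' (idm E Eo)) (cmp E \<rho>' N)"
      unfolding \<psi>_def using distl[OF id_hom[OF Eo] N rho'] .
    also have "\<dots> = madd E (madd E \<rho> (mneg E td)) td" using idr rho' rho'N unfolding \<rho>'_def by simp
    also have "\<dots> = madd E \<rho> (madd E (mneg E td) td)" using madd_assoc rho ntd td by blast
    also have "\<dots> = \<rho>" using madd_negl td madd_0r rho by simp
    finally show ?thesis .
  qed
  have TSw: "realizes E (ezero E A1 A2) A2 i2 S p1 A1" using rz_split biprod_swap[OF bp] by blast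
  define b where "b = cmp E \<psi> b0"
  have b: "b \<in> hom E S Eo" unfolding b_def using cmp_hom b0 psi by blast
  have isob: "is_iso E b" unfolding b_def using iso_cmp[OF b0(1) psi b0(2) isopsi] .
  have rb: "cmp E \<rho>' b = p1" unfolding b_def using assoc[OF b0(1) psi rho'] rho'psi rhob0 by simp
  have bi2: "cmp E b i2 \<in> hom E A2 Eo" using cmp_hom b bh by blast
  have Ta: "realizes E (ezero E A1 A2) A2 (cmp E b i2) Eo \<rho>' A1"
    using rz_trans[OF TSw bi2 rho' b isob refl rb] .
  obtain Eo2 hh dd2 ee d3 where R3: "realizes E d3 A2 (cmp E h' (cmp E b i2)) M hh Eo2"
    and R4: "realizes E (epush E \<rho>' d'') A1 dd2 Eo2 ee C"
    using ET4[OF Ta R1] by blast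
  define Xt where "Xt = epush E \<tau> \<delta>2"
  have Xt: "Xt \<in> ext E C A1" unfolding Xt_def using push_ext tau mT2 by blast
  have "epush E td d'' = Xt" unfolding td_def Xt_def using push_cmp[OF mR2(2) tau mR1(1)] c3 by simp
  moreover have "epush E \<rho> d'' = eadd E Xt \<delta>1"
  proof -
    have p1: "epush E \<tau>' \<delta>2 \<in> ext E C Eo" using push_ext tau' mT2 by blast
    have "epush E \<rho> d'' = eadd E (epush E \<rho> (epush E \<tau>' \<delta>2)) (epush E \<rho> e\<delta>1)"
      using d''eq push_add[OF rho p1 ed1] by simp
    also have "\<dots> = eadd E Xt (epush E (cmp E \<rho> e) \<delta>1)" unfolding Xt_def \<tau>_def e\<delta>1_def
      using push_cmp[OF tau'(1) rho mT2(1)] push_cmp[OF mR2(1) rho mT1(1)] by simp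
    also have "\<dots> = eadd E Xt \<delta>1" using rhoe push_id mT1 by simp
    finally show ?thesis .
  qed
  ultimately have "epush E \<rho>' d'' = eadd E (eadd E Xt \<delta>1) (eneg E Xt)"
    unfolding \<rho>'_def using push_madd[OF rho ntd mR1(1)] push_mneg[OF td mR1(1)] by simp
  also have "\<dots> = eadd E (eadd E \<delta>1 Xt) (eneg E Xt)" using eadd_comm Xt mT1 by metis
  also have "\<dots> = eadd E \<delta>1 (eadd E Xt (eneg E Xt))" using eadd_assoc mT1 Xt eneg_ext by blast
  also have "\<dots> = \<delta>1" using eadd_negr Xt eadd_0r mT1 by simp
  finally have R4': "realizes E \<delta>1 A1 dd2 Eo2 ee C" using R4 by simp
  obtain bb where "bb \<in> hom E B1 Eo2" "is_iso E bb" using rz_iso[OF T1 R4'] by blast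
  then show ?thesis using T3 R3 by blast
qed

lemma Gall: "realizes E \<theta> F \<alpha> W \<beta> L \<Longrightarrow> proj_res E F r \<Longrightarrow> proj_res E L r \<Longrightarrow> proj_res E W r"
proof (induct r arbitrary: \<theta> F \<alpha> W \<beta> L)
  case 0
  then show ?case using pr0[OF G0[OF 0(1) pr0_proj[OF 0(2)] pr0_proj[OF 0(3)]]] by simp
next
  case (Suc k)
  have T: "realizes E \<theta> F \<alpha> W \<beta> L" by (rule Suc.prems(1))
  obtain dL KL iL XL pL where T0: "realizes E dL KL iL XL pL L \<and> projective E XL \<and> proj_res E KL k"
    using pr_tail[OF Suc.prems(3)] by (elim exE) (rule that)
  have TL: "realizes E dL KL iL XL pL L" and PX: "projective E XL" and RK: "proj_res E KL k" using T0 by auto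
  obtain M m1 e2 m2 e3 Eo2 dA dB b where P0: "realizes E dA KL m1 M e2 W \<and> realizes E dB F m2 M e3 Eo2 \<and>
           b \<in> hom E XL Eo2 \<and> is_iso E b"
    using PB[OF TL T] by (elim exE) (rule that)
  have TA: "realizes E dA KL m1 M e2 W" and TB: "realizes E dB F m2 M e3 Eo2"
    and b: "b \<in> hom E XL Eo2" "is_iso E b" using P0 by auto
  have PE: "projective E Eo2" using proj_iso[OF PX b] .
  have RM: "proj_res E M (Suc k)" using split_res[OF TB PE Suc.prems(2)] .
  show ?case using cone[OF Suc.hyps TA RK order_refl RM] .
qed

lemma cone_full: assumes T: "realizes E d L u M v N" and RL: "proj_res E L a" and ab: "Suc a \<le> b"
  and RM: "proj_res E M b" shows "proj_res E N b"
proof -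
  obtain k where b: "b = Suc k" and ak: "a \<le> k" using ab by (cases b) auto
  show ?thesis using cone[OF Gall T RL ak RM[unfolded b]] b by simp
qed

end

lemma af_obj: "additive_functor S T F \<Longrightarrow> X \<in> obj S \<Longrightarrow> fo F X \<in> obj T"
  unfolding additive_functor_def by blast
lemma af_hom: "additive_functor S T F \<Longrightarrow> f \<in> hom S X Y \<Longrightarrow> fm F f \<in> hom T (fo F X) (fo F Y)"
  unfolding additive_functor_def by blast
lemma af_id: "additive_functor S T F \<Longrightarrow> X \<in> obj S \<Longrightarrow> fm F (idm S X) = idm T (fo F X)"
  unfolding additive_functor_def by blast
lemma af_cmp: "additive_functor S T F \<Longrightarrow> f \<in> hom S X Y \<Longrightarrow> g \<in> hom S Y Z \<Longrightarrow>
   fm F (cmp S g f) = cmp T (fm F g) (fm F f)"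
  unfolding additive_functor_def by blast

lemma ex_af: "exact_functor S T F \<Longrightarrow> additive_functor S T F"
  unfolding exact_functor_def by blast
lemma ex_pc: "exact_functor S T F \<Longrightarrow> preserves_compatible S T F"
  unfolding exact_functor_def by blast
lemma ex_rz: assumes "exact_functor S T F" "realizes S d A x B y C"
  shows "\<exists>d'. realizes T d' (fo F A) (fm F x) (fo F B) (fm F y) (fo F C)"
proof -
  obtain \<eta> where "\<forall>d A x B y C. realizes S d A x B y C \<longrightarrow>
          realizes T (\<eta> d) (fo F A) (fm F x) (fo F B) (fm F y) (fo F C)"
    using assms(1) unfolding exact_functor_def by (elim conjE exE) blast
  then show ?thesis using assms(2) by blast
qed

lemma rex_af: "right_exact_functor S T F \<Longrightarrow> additive_functor S T F"
  unfolding right_exact_functor_def by blast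
lemma rex_rz: assumes "right_exact_functor S T F" "realizes S d A f B g C"
  shows "\<exists>A' x y e. realizes T e A' x (fo F B) (fm F g) (fo F C) \<and>
          y \<in> hom T (fo F A) A' \<and> compatible T y \<and> deflation T y \<and> fm F f = cmp T x y"
proof -
  have "\<forall>d A f B g C. realizes S d A f B g C \<longrightarrow>
       (\<exists>A' x y e. realizes T e A' x (fo F B) (fm F g) (fo F C) \<and>
          y \<in> hom T (fo F A) A' \<and> compatible T y \<and> deflation T y \<and> fm F f = cmp T x y)"
    using assms(1) unfolding right_exact_functor_def by (elim conjE) assumption
  then show ?thesis using assms(2) by blast
qed

lemma adj_un: "adjunction S T F G un cu \<Longrightarrow> X \<in> obj S \<Longrightarrow> un X \<in> hom S X (fo G (fo F X))"
  unfolding adjunction_def by (elim conjE) blast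
lemma adj_cu: "adjunction S T F G un cu \<Longrightarrow> Y \<in> obj T \<Longrightarrow> cu Y \<in> hom T (fo F (fo G Y)) Y"
  unfolding adjunction_def by (elim conjE) blast
lemma adj_unnat: "adjunction S T F G un cu \<Longrightarrow> f \<in> hom S X X' \<Longrightarrow>
    cmp S (un X') f = cmp S (fm G (fm F f)) (un X)"
  unfolding adjunction_def by (elim conjE) blast
lemma adj_cunat: "adjunction S T F G un cu \<Longrightarrow> g \<in> hom T Y Y' \<Longrightarrow>
    cmp T g (cu Y) = cmp T (cu Y') (fm F (fm G g))"
  unfolding adjunction_def by (elim conjE) blast
lemma adj_tri1: "adjunction S T F G un cu \<Longrightarrow> X \<in> obj S \<Longrightarrow>
    cmp T (cu (fo F X)) (fm F (un X)) = idm T (fo F X)"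
  unfolding adjunction_def by (elim conjE) blast
lemma adj_tri2: "adjunction S T F G un cu \<Longrightarrow> Y \<in> obj T \<Longrightarrow>
    cmp S (fm G (cu Y)) (un (fo G Y)) = idm S (fo G Y)"
  unfolding adjunction_def by (elim conjE) blast

section \<open>Adjunction facts for j_! -| j^*\<close>

lemma unit_iso:
  assumes GB: "ge B" and GC: "ge C"
    and adj: "adjunction C B jsh jup un cu" and ff: "fully_faithful C B jsh"
    and fa: "additive_functor C B jsh" and ga: "additive_functor B C jup"
    and X: "X \<in> obj C"
  shows "is_iso C (un X)"
proof -
  interpret GB: ge B by (rule GB)
  interpret GC: ge C by (rule GC)
  have jX: "fo jsh X \<in> obj B" using af_obj[OF fa X] .
  define XX where "XX = fo jup (fo jsh X)"
  have XX: "XX \<in> obj C" unfolding XX_def using af_obj[OF ga jX] .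
  have u: "un X \<in> hom C X XX" unfolding XX_def using adj_un[OF adj X] .
  have ups: "cu (fo jsh X) \<in> hom B (fo jsh XX) (fo jsh X)" unfolding XX_def using adj_cu[OF adj jX] .
  have bij: "bij_betw (fm jsh) (hom C XX X) (hom B (fo jsh XX) (fo jsh X))" using ff XX X unfolding fully_faithful_def by blast
  then have "cu (fo jsh X) \<in> fm jsh ` hom C XX X" using ups unfolding bij_betw_def by simp
  then obtain r where r: "r \<in> hom C XX X" "fm jsh r = cu (fo jsh X)" by (elim imageE) simp
  have inj: "inj_on (fm jsh) (hom C X X)" using ff X unfolding fully_faithful_def bij_betw_def by blast
  have ru: "cmp C r (un X) \<in> hom C X X" using GC.cmp_hom[OF u r(1)] .
  have "fm jsh (cmp C r (un X)) = cmp B (cu (fo jsh X)) (fm jsh (un X))" using af_cmp[OF fa u r(1)] r by simp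
  also have "\<dots> = idm B (fo jsh X)" using adj_tri1[OF adj X] .
  also have "\<dots> = fm jsh (idm C X)" using af_id[OF fa X] by simp
  finally have 1: "cmp C r (un X) = idm C X" using inj_onD[OF inj _ ru GC.id_hom[OF X]] by blast
  have "cmp C (un X) r = cmp C (fm jup (fm jsh r)) (un XX)" using adj_unnat[OF adj r(1)] .
  also have "\<dots> = cmp C (fm jup (cu (fo jsh X))) (un (fo jup (fo jsh X)))" using r XX_def by simp
  also have "\<dots> = idm C XX" unfolding XX_def using adj_tri2[OF adj jX] .
  finally have 2: "cmp C (un X) r = idm C XX" .
  show ?thesis using GC.iso_intro[OF u r(1) 1 2] .
qed

lemma jsh_proj:
  assumes GB: "ge B" and GC: "ge C"
    and adj: "adjunction C B jsh jup un cu"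
    and fa: "additive_functor C B jsh" and ex: "exact_functor B C jup"
    and P: "projective C P"
  shows "projective B (fo jsh P)"
proof -
  interpret GB: ge B by (rule GB)
  interpret GC: ge C by (rule GC)
  have ga: "additive_functor B C jup" using ex_af[OF ex] .
  have Po: "P \<in> obj C" using GC.proj_obj[OF P] .
  have jP: "fo jsh P \<in> obj B" using af_obj[OF fa Po] .
  have "\<exists>b\<in>hom B (fo jsh P) Bm. cmp B y b = c"
    if T: "realizes B d A x Bm y Cm" and c: "c \<in> hom B (fo jsh P) Cm" for d A x Bm y Cm c
  proof -
    have m: "x \<in> hom B A Bm" "y \<in> hom B Bm Cm" using GB.rz_mem T by auto
    have Bo: "Bm \<in> obj B" and Co: "Cm \<in> obj B" using GB.hom_obj m by auto
    obtain d' where T': "realizes C d' (fo jup A) (fm jup x) (fo jup Bm) (fm jup y) (fo jup Cm)"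
      using ex_rz[OF ex T] by blast
    have uP: "un P \<in> hom C P (fo jup (fo jsh P))" using adj_un[OF adj Po] .
    have jc: "fm jup c \<in> hom C (fo jup (fo jsh P)) (fo jup Cm)" using af_hom[OF ga c] .
    define c' where "c' = cmp C (fm jup c) (un P)"
    have c': "c' \<in> hom C P (fo jup Cm)" unfolding c'_def using GC.cmp_hom[OF uP jc] .
    obtain b' where b': "b' \<in> hom C P (fo jup Bm)" "cmp C (fm jup y) b' = c'"
      using P T' c' unfolding projective_def by blast
    have uB: "cu Bm \<in> hom B (fo jsh (fo jup Bm)) Bm" using adj_cu[OF adj Bo] .
    have uC: "cu Cm \<in> hom B (fo jsh (fo jup Cm)) Cm" using adj_cu[OF adj Co] .
    have ujP: "cu (fo jsh P) \<in> hom B (fo jsh (fo jup (fo jsh P))) (fo jsh P)" using adj_cu[OF adj jP] .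
    have jb': "fm jsh b' \<in> hom B (fo jsh P) (fo jsh (fo jup Bm))" using af_hom[OF fa b'(1)] .
    have jy: "fm jup y \<in> hom C (fo jup Bm) (fo jup Cm)" using af_hom[OF ga m(2)] .
    have jjy: "fm jsh (fm jup y) \<in> hom B (fo jsh (fo jup Bm)) (fo jsh (fo jup Cm))" using af_hom[OF fa jy] .
    have jjc: "fm jsh (fm jup c) \<in> hom B (fo jsh (fo jup (fo jsh P))) (fo jsh (fo jup Cm))" using af_hom[OF fa jc] .
    have juP: "fm jsh (un P) \<in> hom B (fo jsh P) (fo jsh (fo jup (fo jsh P)))" using af_hom[OF fa uP] .
    define b where "b = cmp B (cu Bm) (fm jsh b')"
    have b: "b \<in> hom B (fo jsh P) Bm" unfolding b_def using GB.cmp_hom[OF jb' uB] .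
    have nat1: "cmp B y (cu Bm) = cmp B (cu Cm) (fm jsh (fm jup y))" using adj_cunat[OF adj m(2)] .
    have nat2: "cmp B c (cu (fo jsh P)) = cmp B (cu Cm) (fm jsh (fm jup c))" using adj_cunat[OF adj c] .
    have tri: "cmp B (cu (fo jsh P)) (fm jsh (un P)) = idm B (fo jsh P)" using adj_tri1[OF adj Po] .
    have "cmp B y b = cmp B (cmp B y (cu Bm)) (fm jsh b')" unfolding b_def using GB.assoc[OF jb' uB m(2)] by simp
    also have "\<dots> = cmp B (cu Cm) (cmp B (fm jsh (fm jup y)) (fm jsh b'))"
      using nat1 GB.assoc[OF jb' jjy uC] by simp
    also have "\<dots> = cmp B (cu Cm) (fm jsh c')" using af_cmp[OF fa b'(1) jy] b' by simp
    also have "\<dots> = cmp B (cu Cm) (cmp B (fm jsh (fm jup c)) (fm jsh (un P)))"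
      unfolding c'_def using af_cmp[OF fa uP jc] by simp
    also have "\<dots> = cmp B (cmp B c (cu (fo jsh P))) (fm jsh (un P))" using nat2 GB.assoc[OF juP jjc uC] by simp
    also have "\<dots> = c" using GB.assoc[OF juP ujP c] tri GB.idr c by simp
    finally show ?thesis using b by blast
  qed
  then show ?thesis using jP unfolding projective_def by blast
qed


lemma step:
  assumes GB: "ge B" and GC: "ge C"
  and exj: "exact_functor B C jup" and rexj: "right_exact_functor C B jsh"
  and adj: "adjunction C B jsh jup un cu" and ff: "fully_faithful C B jsh"
  and R2: "\<And>Y. Y \<in> obj B \<Longrightarrow> zero_obj C (fo jup Y) \<Longrightarrow> (\<exists>X\<in>obj A. isomorphic B Y (fo ilow X))"
  and gl: "\<And>X. X \<in> obj A \<Longrightarrow> proj_res B (fo ilow X) m"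
  and T: "realizes C d K' g P f K''" and PP: "projective C P"
  and RK: "proj_res B (fo jsh K') q" and mq: "Suc m \<le> q"
  shows "proj_res B (fo jsh K'') (Suc q)"
proof -
  interpret GB: ge B by (rule GB)
  interpret GC: ge C by (rule GC)
  have fa: "additive_functor C B jsh" using rex_af[OF rexj] .
  have ga: "additive_functor B C jup" using ex_af[OF exj] .
  have mT: "d \<in> ext C K'' K'" "g \<in> hom C K' P" "f \<in> hom C P K''" using GC.rz_mem[OF T] by auto
  have K': "K' \<in> obj C" and Po: "P \<in> obj C" using GC.hom_obj[OF mT(2)] by auto
  obtain A' x y e where Rx0: "realizes B e A' x (fo jsh P) (fm jsh f) (fo jsh K'') \<and>
          y \<in> hom B (fo jsh K') A' \<and> compatible B y \<and> deflation B y \<and> fm jsh g = cmp B x y"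
    using rex_rz[OF rexj T] by (elim exE) (rule that)
  have Rx: "realizes B e A' x (fo jsh P) (fm jsh f) (fo jsh K'')" and y: "y \<in> hom B (fo jsh K') A'"
    and cy: "compatible B y" and dy: "deflation B y" and gxy: "fm jsh g = cmp B x y" using Rx0 by auto
  have x: "x \<in> hom B A' (fo jsh P)" using GB.rz_mem[OF Rx] by auto
  obtain dL L u Bq Cq where TL0: "realizes B dL L u Bq y Cq" using dy unfolding deflation_def by blast
  have "y \<in> hom B Bq Cq" using GB.rz_mem[OF TL0] by auto
  then have "Bq = fo jsh K'" "Cq = A'" using GB.hom_uniq[OF y] by auto
  then have TL: "realizes B dL L u (fo jsh K') y A'" using TL0 by simp
  obtain dd where TJ: "realizes C dd (fo jup L) (fm jup u) (fo jup (fo jsh K')) (fm jup y) (fo jup A')"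
    using ex_rz[OF exj TL] by blast
  have U: "un K' \<in> hom C K' (fo jup (fo jsh K'))" using adj_un[OF adj K'] .
  have iU: "is_iso C (un K')" using unit_iso[OF GB GC adj ff fa ga K'] .
  obtain Ui where Ui: "Ui \<in> hom C (fo jup (fo jsh K')) K'" "cmp C Ui (un K') = idm C K'"
    "cmp C (un K') Ui = idm C (fo jup (fo jsh K'))" using GC.iso_inv[OF U iU] by blast
  have iUi: "is_iso C Ui" using GC.iso_inv_iso[OF U Ui] .
  have UP: "un P \<in> hom C P (fo jup (fo jsh P))" using adj_un[OF adj Po] .
  have iUP: "is_iso C (un P)" using unit_iso[OF GB GC adj ff fa ga Po] .
  obtain UPi where UPi: "UPi \<in> hom C (fo jup (fo jsh P)) P" "cmp C UPi (un P) = idm C P"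
    "cmp C (un P) UPi = idm C (fo jup (fo jsh P))" using GC.iso_inv[OF UP iUP] by blast
  have jy: "fm jup y \<in> hom C (fo jup (fo jsh K')) (fo jup A')" using af_hom[OF ga y] .
  have jx: "fm jup x \<in> hom C (fo jup A') (fo jup (fo jsh P))" using af_hom[OF ga x] .
  define z where "z = cmp C (fm jup y) (un K')"
  have z: "z \<in> hom C K' (fo jup A')" unfolding z_def using GC.cmp_hom[OF U jy] .
  have jg: "fm jsh g \<in> hom B (fo jsh K') (fo jsh P)" using af_hom[OF fa mT(2)] .
  have jjg: "fm jup (fm jsh g) \<in> hom C (fo jup (fo jsh K')) (fo jup (fo jsh P))" using af_hom[OF ga jg] .
  have "cmp C (fm jup x) z = cmp C (cmp C (fm jup x) (fm jup y)) (un K')"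
    unfolding z_def using GC.assoc[OF U jy jx] .
  also have "\<dots> = cmp C (fm jup (fm jsh g)) (un K')" using af_cmp[OF ga y x] gxy by simp
  also have "\<dots> = cmp C (un P) g" using adj_unnat[OF adj mT(2)] by simp
  finally have xz: "cmp C (fm jup x) z = cmp C (un P) g" .
  have Ug: "cmp C (un P) g \<in> hom C K' (fo jup (fo jsh P))" using GC.cmp_hom[OF mT(2) UP] .
  have fU: "cmp C f UPi \<in> hom C (fo jup (fo jsh P)) K''" using GC.cmp_hom[OF UPi(1) mT(3)] .
  have "cmp C (cmp C f UPi) (un P) = f" using GC.assoc[OF UP UPi(1) mT(3)] UPi GC.idr[OF mT(3)] by simp
  then have "realizes C d K' (cmp C (un P) g) (fo jup (fo jsh P)) (cmp C f UPi) K''"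
    using GC.rz_trans[OF T Ug fU UP iUP refl] by simp
  then have "inflation C (cmp C (un P) g)" unfolding inflation_def by blast
  then have "inflation C (cmp C (fm jup x) z)" using xz by simp
  then have iz: "inflation C z" using GC.WIC_inf[OF z jx] by blast
  then obtain d1 A1 B1 y1 C1 where T1: "realizes C d1 A1 z B1 y1 C1" unfolding inflation_def by blast
  have "z \<in> hom C A1 B1" using GC.rz_mem[OF T1] by auto
  then have "A1 = K'" using GC.hom_uniq[OF z] by auto
  then have T1': "realizes C d1 K' z B1 y1 C1" using T1 by simp
  obtain d2 where "realizes C d2 (fo jup (fo jsh K')) (cmp C z Ui) B1 y1 C1"
    using GC.trans_start[OF T1' Ui(1) iUi] by blast
  moreover have "cmp C z Ui = fm jup y" unfolding z_def
    using GC.assoc[OF Ui(1) U jy] Ui GC.idr[OF jy] by simp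
  ultimately have infy: "inflation C (fm jup y)" unfolding inflation_def by metis
  have defy: "deflation C (fm jup y)" using TJ unfolding deflation_def by blast
  have cjy: "compatible C (fm jup y)" using ex_pc[OF exj] y cy unfolding preserves_compatible_def by blast
  have isoy: "is_iso C (fm jup y)" using cjy infy defy unfolding compatible_def by blast
  have zL: "zero_obj C (fo jup L)" using GC.zero_cocone[OF TJ isoy] .
  have Lo: "L \<in> obj B" using GB.rz_obj[OF TL] by blast
  obtain X' where X': "X' \<in> obj A" "isomorphic B L (fo ilow X')" using R2[OF Lo zL] by blast
  obtain \<phi> where phi: "\<phi> \<in> hom B L (fo ilow X')" "is_iso B \<phi>" using X'(2) unfolding isomorphic_def by blast
  obtain \<phi>i where phii: "\<phi>i \<in> hom B (fo ilow X') L" "cmp B \<phi>i \<phi> = idm B L" "cmp B \<phi> \<phi>i = idm B (fo ilow X')"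
    using GB.iso_inv[OF phi] by blast
  have "is_iso B \<phi>i" using GB.iso_inv_iso[OF phi(1) phii] .
  then have RL: "proj_res B L m" using GB.pr_iso[OF gl[OF X'(1)] phii(1)] by blast
  have RA: "proj_res B A' q" using GB.cone_full[OF TL RL mq RK] .
  have PjP: "projective B (fo jsh P)" using jsh_proj[OF GB GC adj fa exj PP] .
  show ?thesis using GB.pr_cons[OF Rx PjP RA] .
qed

theorem mainTheorem2:
  fixes A :: "('oa,'ma,'ea,'k::field) extri"
    and B :: "('ob,'mb,'eb,'k) extri"
    and C :: "('oc,'mc,'ec,'k) extri"
    and iup :: "('ob,'mb,'oa,'ma) fctr" and ilow :: "('oa,'ma,'ob,'mb) fctr"
    and ish :: "('ob,'mb,'oa,'ma) fctr"
    and jsh :: "('oc,'mc,'ob,'mb) fctr" and jup :: "('ob,'mb,'oc,'mc) fctr"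
    and jlow :: "('oc,'mc,'ob,'mb) fctr"
  assumes "good_extri A" and "good_extri B" and "good_extri C"
    and "recollement A B C iup ilow ish jsh jup jlow"
    and "X \<in> obj C"
  shows "pd B (fo jsh X) \<le> pd C X + gl_rel A B ilow + 1"
proof -
  have GB: "ge B" using assms(2) by (simp add: ge_def)
  have GC: "ge C" using assms(3) by (simp add: ge_def)
  interpret GB: ge B by (rule GB)
  interpret GC: ge C by (rule GC)
  have exj: "exact_functor B C jup" and rexj: "right_exact_functor C B jsh"
    using assms(4) unfolding recollement_def by auto
  obtain nu cu1 un2 theta upsilon un4 vartheta cu4 where
    adj: "adjunction C B jsh jup un4 upsilon" and
    R2all: "\<forall>Y. (Y \<in> obj B \<and> (\<exists>X\<in>obj A. isomorphic B Y (fo ilow X))) \<longleftrightarrow>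
           (Y \<in> obj B \<and> zero_obj C (fo jup Y))" and
    ff: "fully_faithful C B jsh"
    using assms(4) unfolding recollement_def by (elim conjE exE) blast
  have R2: "\<And>Y. Y \<in> obj B \<Longrightarrow> zero_obj C (fo jup Y) \<Longrightarrow> (\<exists>X\<in>obj A. isomorphic B Y (fo ilow X))"
    using R2all by blast
  have fa: "additive_functor C B jsh" using rex_af[OF rexj] .
  show ?thesis
  proof (cases "pd C X")
    case (enat n)
    show ?thesis
    proof (cases "gl_rel A B ilow")
      case (enat m)
      have gl: "proj_res B (fo ilow X') m" if X': "X' \<in> obj A" for X'
      proof -
        have "pd B (fo ilow X') \<le> gl_rel A B ilow" unfolding gl_rel_def using X' by (rule SUP_upper)
        then show ?thesis using GB.pd_le_res enat by simp
      qed
      have RX: "proj_res C X n" using GC.pd_enat \<open>pd C X = enat n\<close> by blast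
      obtain K P where KP: "K 0 = X" "K n = P n" "\<forall>i<n. \<exists>d g f. realizes C d (K (Suc i)) g (P i) f (K i)"
        "\<forall>i\<le>n. projective C (P i)" using RX unfolding proj_res_def by blast
      have claim: "k \<le> n \<Longrightarrow> proj_res B (fo jsh (K (n - k))) (Suc m + k)" for k
      proof (induct k)
        case 0
        have "projective C (K n)" using KP by simp
        then have "projective B (fo jsh (K n))" using jsh_proj[OF GB GC adj fa exj] by blast
        then have r0: "proj_res B (fo jsh (K n)) 0" using GB.pr0 by blast
        show ?case using GB.pr_mono[OF r0, of "Suc m"] by simp
      next
        case (Suc k)
        define i where "i = n - Suc k"
        have i: "i < n" "Suc i = n - k" using Suc.prems unfolding i_def by auto
        obtain d g f where T: "realizes C d (K (Suc i)) g (P i) f (K i)" using KP(3) i(1) by blast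
        have PP: "projective C (P i)" using KP(4) i(1) by simp
        have RK: "proj_res B (fo jsh (K (Suc i))) (Suc m + k)" using Suc.hyps Suc.prems i(2) by simp
        have "proj_res B (fo jsh (K i)) (Suc (Suc m + k))"
          using step[OF GB GC exj rexj adj ff R2 gl T PP RK] by simp
        then show ?case unfolding i_def by simp
      qed
      have "proj_res B (fo jsh X) (Suc m + n)" using claim[of n] KP(1) by simp
      then have "pd B (fo jsh X) \<le> enat (Suc m + n)" using GB.pd_le by blast
      also have "\<dots> = pd C X + gl_rel A B ilow + 1" using \<open>pd C X = enat n\<close> enat
        by (simp add: one_enat_def)
      finally show ?thesis .
    next
      case infinity
      then show ?thesis by simp
    qed
  next
    case infinity
    then show ?thesis by simp
  qed
qed


end
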